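(* Let $n\ge 2$ and $y=(y_1,\dots,y_{n-1},q)\in\mathbb C^n$. The following are equivalent ("for all $j$" means for all $j=1,\dots,[n/2]$): (1) $y\in\widetilde\Gamma_n$; (2) $\binom{n}{j}-y_jz-y_{n-j}w+\binom{n}{j}qzw\neq 0$ for all $z,w\in\mathbb D$ and all $j$; (3) for all $j$: $\|\Phi_j(\cdot,y)\|_{H^\infty}\le 1$, and if $y_jy_{n-j}=\binom{n}{j}^2q$ then in addition $|y_{n-j}|\le\binom{n}{j}$; (3') for all $j$: $\|\Phi_{n-j}(\cdot,y)\|_{H^\infty}\le 1$, and if $y_jy_{n-j}=\binom{n}{j}^2q$ then in addition $|y_j|\le\binom{n}{j}$; (4) for all $j$: $\binom{n}{j}|y_j-\bar y_{n-j}q|+|y_jy_{n-j}-\binom{n}{j}^2q|\le\binom{n}{j}^2-|y_{n-j}|^2$, and if $y_jy_{n-j}=\binom{n}{j}^2q$ then in addition $|y_j|\le\binom{n}{j}$; (4') for all $j$: $\binom{n}{j}|y_{n-j}-\bar y_{j}q|+|y_jy_{n-j}-\binom{n}{j}^2q|\le\binom{n}{j}^2-|y_{j}|^2$, and if $y_jy_{n-j}=\binom{n}{j}^2q$ then in addition $|y_{n-j}|\le\binom{n}{j}$; (5) for all $j$: $|y_j|^2-|y_{n-j}|^2+\binom{n}{j}^2|q|^2+2\binom{n}{j}|y_{n-j}-\bar y_jq|\le\binom{n}{j}^2$ and $|y_{n-j}|\le\binom{n}{j}$; (5') for all $j$: $|y_{n-j}|^2-|y_{j}|^2+\binom{n}{j}^2|q|^2+2\binom{n}{j}|y_{j}-\bar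 y_{n-j}q|\le\binom{n}{j}^2$ and $|y_{j}|\le\binom{n}{j}$; (6) $|q|\le 1$ and $|y_j|^2+|y_{n-j}|^2-\binom{n}{j}^2|q|^2+2|y_jy_{n-j}-\binom{n}{j}^2q|\le\binom{n}{j}^2$ for all $j$; (7) $|y_{n-j}-\bar y_jq|+|y_j-\bar y_{n-j}q|\le\binom{n}{j}(1-|q|^2)$ for all $j$, and if $|q|=1$ then in addition $|y_j|\le\binom{n}{j}$ for all $j$; (8) there exist $2\times2$ matrices $B_1,\dots,B_{[n/2]}$ with $\|B_j\|\le 1$, $y_j=\binom{n}{j}[B_j]_{11}$, $y_{n-j}=\binom{n}{j}[B_j]_{22}$ for all $j$, and $\det B_1=\dots=\det B_{[n/2]}=q$; (9) the same as (8) with the $B_j$ additionally symmetric; (10) $|q|\le1$ and there exists $(\beta_1,\dots,\beta_{n-1})\in\mathbb C^{n-1}$ with $y_j=\beta_j+\bar\beta_{n-j}q$, $y_{n-j}=\beta_{n-j}+\bar\beta_jq$ and $|\beta_j|+|\beta_{n-j}|\le\binom{n}{j}$ for all $j$.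
   Context: $\mathbb D$ is the open unit disc, $[x]$ the integer part, $\|\cdot\|$ the operator norm. $\widetilde{\mathbb G}_n=\{(y_1,\dots,y_{n-1},q)\in\mathbb C^n: q\in\mathbb D,\ y_j=\beta_j+\bar\beta_{n-j}q$ for some $\beta_j\in\mathbb C$ with $|\beta_j|+|\beta_{n-j}|<\binom{n}{j}$, $j=1,\dots,n-1\}$, and $\widetilde\Gamma_n$ denotes its closure in $\mathbb C^n$. For $z\in\mathbb C$, $y=(y_1,\dots,y_{n-1},q)$ and $j\in\{1,\dots,n-1\}$: $\Phi_j(z,y)=\dfrac{\binom{n}{j}qz-y_j}{y_{n-j}z-\binom{n}{j}}$ if $y_{n-j}z\ne\binom{n}{j}$ and $y_jy_{n-j}\neq\binom{n}{j}^2q$, and $\Phi_j(z,y)=y_j/\binom{n}{j}$ if $y_jy_{n-j}=\binom{n}{j}^2q$; $\|\Phi_j(\cdot,y)\|_{H^\infty}=\sup_{z\in\mathbb D}|\Phi_j(z,y)|$, understood as $+\infty$ if $\Phi_j(\cdot,y)$ is undefined somewhere on $\mathbb D$ or unbounded there. *)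

theory Defs
  imports "HOL-Analysis.Analysis"
begin

text \<open>Points of C^n are represented as pairs (y, q) with y :: nat => complex, where only
the coordinates y 1, ..., y (n-1) are relevant, and q :: complex the last coordinate.
The topology is the product topology on (nat => complex) x complex; the set below is a
cylinder (no constraint on coordinates outside 1..n-1), so closure acts as closure in C^n.\<close>

definition Gtilde :: "nat \<Rightarrow> ((nat \<Rightarrow> complex) \<times> complex) set" where
  "Gtilde n = {(y, q). q \<in> ball 0 1 \<and>
     (\<exists>\<beta> :: nat \<Rightarrow> complex. \<forall>j\<in>{1..n-1}.
        y j = \<beta> j + cnj (\<beta> (n - j)) * q \<and>
        cmod (\<beta> j) + cmod (\<beta> (n - j)) < real (n choose j))}"

definition Gammatilde :: "nat \<Rightarrow> ((nat \<Rightarrow> complex) \<times> complex) set" where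
  "Gammatilde n = closure (Gtilde n)"

definition Phi :: "nat \<Rightarrow> nat \<Rightarrow> (nat \<Rightarrow> complex) \<Rightarrow> complex \<Rightarrow> complex \<Rightarrow> complex option" where
  "Phi n j y q z =
     (let c = of_nat (n choose j) :: complex in
      if y j * y (n - j) = c ^ 2 * q then Some (y j / c)
      else if y (n - j) * z \<noteq> c then Some ((c * q * z - y j) / (y (n - j) * z - c))
      else None)"

definition Phi_Hinf :: "nat \<Rightarrow> nat \<Rightarrow> (nat \<Rightarrow> complex) \<Rightarrow> complex \<Rightarrow> ereal" where
  "Phi_Hinf n j y q =
     (if \<forall>z\<in>ball 0 1. Phi n j y q z \<noteq> None
      then (SUP z\<in>ball 0 1. ereal (cmod (the (Phi n j y q z))))
      else \<infinity>)"

end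

theory Submission
  imports Defs
begin


definition Hc :: "complex \<Rightarrow> complex \<Rightarrow> complex \<Rightarrow> bool" where
  "Hc a b p \<longleftrightarrow> cmod p \<le> 1 \<and> cmod (a - cnj b * p) + cmod (b - cnj a * p) \<le> 1 - (cmod p)^2
     \<and> cmod a \<le> 1 \<and> cmod b \<le> 1"

lemma Hc_sym: "Hc a b p \<longleftrightarrow> Hc b a p"
  unfolding Hc_def by auto

lemma pcnj: "p * cnj p = of_real ((cmod p)^2)"
  by (metis complex_norm_square)

lemma nm: "0 \<le> D \<Longrightarrow> cmod (z * complex_of_real D) = cmod z * D"
  by (simp add: norm_mult)

lemma nd: "0 < D \<Longrightarrow> cmod (z / complex_of_real D) = cmod z / D"
  by (simp add: norm_divide)

lemma E1_diff: 
  assumes "a = b1 + cnj b2 * p" "b = b2 + cnj b1 * p"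
  shows "a - cnj b * p = b1 * of_real (1 - (cmod p)^2)"
proof -
  have "a - cnj b * p = b1 - b1 * (p * cnj p)" using assms by (simp add: algebra_simps)
  then show ?thesis by (simp add: pcnj algebra_simps)
qed

lemma E1_imp_Hc:
  assumes "a = b1 + cnj b2 * p" "b = b2 + cnj b1 * p" "cmod b1 + cmod b2 \<le> 1" "cmod p \<le> 1"
  shows "Hc a b p"
proof -
  have P: "0 \<le> 1 - (cmod p)^2" using assms(4) by (simp add: abs_square_le_1)
  have X: "cmod (a - cnj b * p) = cmod b1 * (1 - (cmod p)^2)"
    unfolding E1_diff[OF assms(1,2)] by (rule nm[OF P])
  have Y: "cmod (b - cnj a * p) = cmod b2 * (1 - (cmod p)^2)"
    unfolding E1_diff[OF assms(2,1)] by (rule nm[OF P])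
  have "cmod a \<le> cmod b1 + cmod b2 * cmod p" using assms(1)
    by (metis complex_mod_cnj norm_mult norm_triangle_ineq)
  also have "\<dots> \<le> 1" using assms(3,4)
    by (smt (verit, best) mult_left_le norm_ge_zero)
  finally have A: "cmod a \<le> 1" .
  have "cmod b \<le> cmod b2 + cmod b1 * cmod p" using assms(2)
    by (metis complex_mod_cnj norm_mult norm_triangle_ineq)
  also have "\<dots> \<le> 1" using assms(3,4)
    by (smt (verit, best) mult_left_le norm_ge_zero)
  finally have B: "cmod b \<le> 1" .
  have "cmod (a - cnj b * p) + cmod (b - cnj a * p) = (cmod b1 + cmod b2) * (1 - (cmod p)^2)"
    using X Y by (simp add: algebra_simps)
  also have "\<dots> \<le> 1 - (cmod p)^2" using assms(3) P by (simp add: mult_left_le_one_le)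
  finally show ?thesis unfolding Hc_def using A B assms(4) by auto
qed

definition cb :: "complex \<Rightarrow> complex \<Rightarrow> complex \<Rightarrow> complex" where
  "cb a b p = (if cmod p < 1 then (a - cnj b * p) / of_real (1 - (cmod p)^2) else a / 2)"

lemma Hc_imp_E1:
  assumes "Hc a b p"
  shows "a = cb a b p + cnj (cb b a p) * p \<and> cmod (cb a b p) + cmod (cb b a p) \<le> 1"
proof (cases "cmod p < 1")
  case True
  define D where "D = 1 - (cmod p)^2"
  have D: "D > 0" using True unfolding D_def
    by (metis abs_norm_cancel abs_square_less_1 diff_gt_0_iff_gt)
  have "cb a b p + cnj (cb b a p) * p = ((a - cnj b * p) + cnj (b - cnj a * p) * p) / of_real D"
    using True by (simp add: cb_def D_def add_divide_distrib)
  also have "(a - cnj b * p) + cnj (b - cnj a * p) * p = a * (1 - p * cnj p)"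
    by (simp add: algebra_simps)
  also have "\<dots> = a * of_real D" by (simp add: pcnj D_def)
  finally have e: "cb a b p + cnj (cb b a p) * p = a" using D by simp
  have "cmod (cb a b p) + cmod (cb b a p) = (cmod (a - cnj b * p) + cmod (b - cnj a * p)) / D"
    using True D nd[OF D] by (simp add: cb_def D_def[symmetric] add_divide_distrib)
  also have "\<dots> \<le> 1" using assms D unfolding Hc_def D_def by simp
  finally show ?thesis using e by simp
next
  case False
  then have p1: "cmod p = 1" using assms unfolding Hc_def by simp
  then have "cmod (a - cnj b * p) + cmod (b - cnj a * p) \<le> 0" using assms unfolding Hc_def by simp
  then have e1: "a = cnj b * p" by (smt (verit) norm_ge_zero right_minus_eq zero_less_norm_iff)
  have "cmod (cb a b p) + cmod (cb b a p) = (cmod a + cmod b) / 2"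
    using False by (simp add: cb_def norm_divide add_divide_distrib)
  also have "\<dots> \<le> 1" using assms unfolding Hc_def by simp
  finally have "cmod (cb a b p) + cmod (cb b a p) \<le> 1" .
  moreover have "cb a b p + cnj (cb b a p) * p = a"
    using False e1 by (simp add: cb_def)
  ultimately show ?thesis by simp
qed


definition E6 :: "complex \<Rightarrow> complex \<Rightarrow> complex \<Rightarrow> bool" where
  "E6 a b p \<longleftrightarrow> cmod p \<le> 1 \<and> (cmod a)^2 + (cmod b)^2 - (cmod p)^2 + 2 * cmod (a*b - p) \<le> 1"

lemma cns: "(complex_of_real (cmod z))^2 = z * cnj z"
  by (metis complex_norm_square of_real_power)

lemma E1_imp_E6:
  assumes ab: "a = b1 + cnj b2 * p" "b = b2 + cnj b1 * p" and s: "cmod b1 + cmod b2 \<le> 1" and p: "cmod p \<le> 1"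
  shows "E6 a b p"
proof -
  define S where "S = 1 - (cmod a)^2 - (cmod b)^2 + (cmod p)^2"
  define u where "u = cmod b1"
  define v where "v = cmod b2"
  define t where "t = cmod p"
  have eq: "S^2 - 4*(cmod (a*b-p))^2 = (1 - t^2)^2 * ((1 - u^2 - v^2)^2 - 4*u^2* v^2)"
  proof -
    have "complex_of_real (S^2 - 4*(cmod (a*b-p))^2) = complex_of_real ((1 - t^2)^2 * ((1 - u^2 - v^2)^2 - 4*u^2* v^2))"
      unfolding S_def u_def v_def t_def of_real_diff of_real_mult of_real_power of_real_add complex_norm_square of_real_numeral of_real_1 cns
      unfolding ab complex_cnj_add complex_cnj_mult complex_cnj_cnj complex_cnj_diff
      by algebra
    then show ?thesis by (simp only: of_real_eq_iff)
  qed
  have Sre: "S = (1 + t^2) * (1 - u^2 - v^2) - 4 * Re (b1 * b2 * cnj p)"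
  proof -
    have "complex_of_real S = complex_of_real ((1 + t^2) * (1 - u^2 - v^2)) - 2 * ((b1 * b2 * cnj p) + cnj (b1 * b2 * cnj p))"
      unfolding S_def u_def v_def t_def of_real_diff of_real_mult of_real_power of_real_add complex_norm_square of_real_numeral of_real_1 cns
      unfolding ab complex_cnj_add complex_cnj_mult complex_cnj_cnj complex_cnj_diff
      by algebra
    also have "\<dots> = complex_of_real ((1 + t^2) * (1 - u^2 - v^2) - 4 * Re (b1 * b2 * cnj p))"
      unfolding complex_add_cnj by simp
    finally show ?thesis by (simp only: of_real_eq_iff)
  qed
  have u0: "u \<ge> 0" "v \<ge> 0" "t \<ge> 0" unfolding u_def v_def t_def by auto
  have uv: "u + v \<le> 1" "t \<le> 1" using s p unfolding u_def v_def t_def by auto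
  have re: "Re (b1 * b2 * cnj p) \<le> u * v * t"
    using complex_Re_le_cmod[of "b1 * b2 * cnj p"] unfolding u_def v_def t_def by (simp add: norm_mult)
  have k: "1 - u^2 - v^2 \<ge> 2 * u * v"
  proof -
    have "(u+v)^2 \<le> 1" using uv u0 by (simp add: power_le_one)
    then show ?thesis by (simp add: power2_eq_square algebra_simps)
  qed
  have tt: "1 + t^2 \<ge> 2 * t"
  proof -
    have "0 \<le> (1-t)^2" by simp
    then show ?thesis by (simp add: power2_eq_square algebra_simps)
  qed
  have "(1 + t^2) * (1 - u^2 - v^2) \<ge> (2*t) * (2*u* v)"
    by (rule mult_mono[OF tt k]) (use u0 in auto)
  moreover have "2 * t * (2 * u * v) = 4 * (u * v * t)" by simp
  ultimately have S0: "S \<ge> 0" using Sre re by linarith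
  have "(1 - u^2 - v^2)^2 \<ge> (2*u* v)^2"
    using k u0 by (simp add: power_mono)
  then have "S^2 - 4*(cmod (a*b-p))^2 \<ge> 0" unfolding eq
    by (simp add: power_mult_distrib)
  then have "(2 * cmod (a*b-p))^2 \<le> S^2" by (simp add: power_mult_distrib)
  then have "2 * cmod (a*b-p) \<le> S" using S0 by (rule power2_le_imp_le)
  then show ?thesis unfolding E6_def S_def using p by simp
qed


lemma quad:
  fixes al de G x y :: real
  assumes "al \<ge> 0" "G\<^sup>2 \<le> al * de" "G \<ge> 0" "de \<ge> 0"
  shows "2 * G * x * y \<le> al * x^2 + de * y^2"
proof (cases "al = 0")
  case True
  then have "G = 0" using assms by simp
  moreover have "de * y^2 \<ge> 0" using assms by simp
  ultimately show ?thesis using True by simp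
next
  case False
  then have a: "al > 0" using assms by simp
  have "al * (al * x^2 + de * y^2 - 2 * G * x * y) = (al * x - G * y)^2 + (al * de - G^2) * y^2"
    by (simp add: power2_eq_square algebra_simps)
  also have "\<dots> \<ge> 0" using assms by simp
  finally have "al * (al * x^2 + de * y^2 - 2 * G * x * y) \<ge> 0" .
  then have "al * x^2 + de * y^2 - 2 * G * x * y \<ge> 0" using a
    by (simp add: zero_le_mult_iff)
  then show ?thesis by simp
qed

lemma quad_de: 
  fixes al de G :: real
  assumes "al + de \<ge> 0" "G\<^sup>2 \<le> al * de"
  shows "al \<ge> 0 \<and> de \<ge> 0"
proof -
  have "al * de \<ge> 0" using assms(2) zero_le_power2[of G] by linarith
  then show ?thesis using assms(1) by (auto simp: zero_le_mult_iff)
qed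

lemma norm2_vec2: "(norm (x::complex^2))^2 = (cmod (x$1))^2 + (cmod (x$2))^2"
  by (simp add: norm_vec_def L2_set_def sum_2)

lemma mv2: fixes M :: "complex^2^2" shows "(M *v (x::complex^2)) $ 1 = M$1$1 * x$1 + M$1$2 * x$2"
           "(M *v (x::complex^2)) $ 2 = M$2$1 * x$1 + M$2$2 * x$2"
  by (simp_all add: matrix_vector_mult_def sum_2)

lemma sym_contr:
  fixes a b w x1 x2 :: complex
  assumes E: "E6 a b (a*b - w^2)"
  shows "(cmod (a*x1 + w*x2))^2 + (cmod (w*x1 + b*x2))^2 \<le> (cmod x1)^2 + (cmod x2)^2"
proof -
  define p where "p = a*b - w^2"
  define al where "al = 1 - (cmod a)^2 - (cmod w)^2"
  define de where "de = 1 - (cmod b)^2 - (cmod w)^2"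
  define g where "g = a * cnj w + w * cnj b"
  have id1: "(cmod x1)^2 + (cmod x2)^2 - (cmod (a*x1 + w*x2))^2 - (cmod (w*x1 + b*x2))^2
      = al * (cmod x1)^2 + de * (cmod x2)^2 - 2 * Re (x1 * cnj x2 * g)"
  proof -
    have "complex_of_real ((cmod x1)^2 + (cmod x2)^2 - (cmod (a*x1 + w*x2))^2 - (cmod (w*x1 + b*x2))^2)
      = complex_of_real (al * (cmod x1)^2 + de * (cmod x2)^2) - ((x1 * cnj x2 * g) + cnj (x1 * cnj x2 * g))"
      unfolding al_def de_def g_def of_real_diff of_real_mult of_real_power of_real_add of_real_numeral of_real_1 cns
      unfolding complex_cnj_add complex_cnj_mult complex_cnj_cnj complex_cnj_diff
      by algebra
    also have "\<dots> = complex_of_real (al * (cmod x1)^2 + de * (cmod x2)^2 - 2 * Re (x1 * cnj x2 * g))"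
      unfolding complex_add_cnj by simp
    finally show ?thesis by (simp only: of_real_eq_iff)
  qed
  have id2: "al * de - (cmod g)^2 = 1 - (cmod a)^2 - (cmod b)^2 - 2 * (cmod w)^2 + (cmod p)^2"
  proof -
    have "complex_of_real (al * de - (cmod g)^2) = complex_of_real (1 - (cmod a)^2 - (cmod b)^2 - 2 * (cmod w)^2 + (cmod p)^2)"
      unfolding al_def de_def g_def p_def of_real_diff of_real_mult of_real_power of_real_add of_real_numeral of_real_1 cns
      unfolding complex_cnj_add complex_cnj_mult complex_cnj_cnj complex_cnj_diff complex_cnj_power
      by algebra
    then show ?thesis by (simp only: of_real_eq_iff)
  qed
  have wz: "(cmod w)^2 = cmod (a*b - p)" unfolding p_def by (simp add: norm_power)
  have e6: "(cmod a)^2 + (cmod b)^2 - (cmod p)^2 + 2 * cmod (a*b - p) \<le> 1" "cmod p \<le> 1"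
    using E unfolding E6_def p_def by auto
  have p2: "(cmod p)^2 \<le> 1" using e6(2) by (simp add: abs_square_le_1)
  have G: "(cmod g)^2 \<le> al * de" using id2 e6 wz by linarith
  have "al + de \<ge> 0" using e6 wz p2 unfolding al_def de_def by linarith
  then have ad: "al \<ge> 0" "de \<ge> 0" using quad_de G by blast+
  have "Re (x1 * cnj x2 * g) \<le> cmod (x1 * cnj x2 * g)" by (rule complex_Re_le_cmod)
  also have "\<dots> = cmod g * cmod x1 * cmod x2" by (simp add: norm_mult)
  also have "2 * (cmod g * cmod x1 * cmod x2) \<le> al * (cmod x1)^2 + de * (cmod x2)^2"
    using quad[OF ad(1) G norm_ge_zero ad(2), of "cmod x1" "cmod x2"] by (simp add: mult_ac)
  finally show ?thesis using id1 by linarith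
qed

lemma E6_imp_E9:
  assumes "E6 a b p"
  shows "\<exists>B :: complex^2^2. onorm (\<lambda>x. B *v x) \<le> 1 \<and> transpose B = B \<and>
           B$1$1 = a \<and> B$2$2 = b \<and> det B = p"
proof -
  define w where "w = csqrt (a*b - p)"
  have w2: "w^2 = a*b - p" unfolding w_def by simp
  define B where "B = (vector [vector [a, w], vector [w, b]] :: complex^2^2)"
  have Be: "B$1$1 = a" "B$1$2 = w" "B$2$1 = w" "B$2$2 = b" unfolding B_def by simp_all
  have "onorm (\<lambda>x. B *v x) \<le> 1"
  proof (rule onorm_le)
    fix x :: "complex^2"
    have "(norm (B *v x))^2 \<le> (norm x)^2"
      unfolding norm2_vec2 mv2 Be
      using sym_contr[of a b w "x$1" "x$2"] assms w2 by simp
    then show "norm (B *v x) \<le> 1 * norm x" using power2_le_imp_le[of "norm (B *v x)" "norm x"] by simp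
  qed
  moreover have "transpose B = B"
    unfolding transpose_def vec_eq_iff forall_2 using Be by simp
  moreover have "det B = p" unfolding det_2 Be using w2 by (simp add: power2_eq_square)
  ultimately show ?thesis using Be by blast
qed


lemma onorm_app:
  fixes B :: "complex^2^2"
  assumes "onorm (\<lambda>x. B *v x) \<le> 1"
  shows "norm (B *v v) \<le> norm v"
proof -
  have "norm (B *v v) \<le> onorm (\<lambda>x. B *v x) * norm v"
    by (rule onorm) simp
  also have "\<dots> \<le> 1 * norm v" using assms by (intro mult_right_mono) auto
  finally show ?thesis by simp
qed

lemma onorm_app2:
  fixes B :: "complex^2^2"
  assumes "onorm (\<lambda>x. B *v x) \<le> 1"
  shows "(cmod (B$1$1 * v1 + B$1$2 * v2))^2 + (cmod (B$2$1 * v1 + B$2$2 * v2))^2 \<le> (cmod v1)^2 + (cmod v2)^2"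
proof -
  have "norm (B *v vector [v1, v2]) \<le> norm (vector [v1, v2] :: complex^2)" by (rule onorm_app[OF assms])
  then have "(norm (B *v vector [v1, v2]))^2 \<le> (norm (vector [v1, v2] :: complex^2))^2"
    by (simp add: power_mono)
  then show ?thesis unfolding norm2_vec2 mv2 by simp
qed

lemma E8_imp_E2:
  fixes B :: "complex^2^2"
  assumes nB: "onorm (\<lambda>x. B *v x) \<le> 1" and z: "cmod z < 1" and w: "cmod w < 1"
  shows "1 - B$1$1 * z - B$2$2 * w + det B * z * w \<noteq> 0"
proof
  assume e: "1 - B$1$1 * z - B$2$2 * w + det B * z * w = 0"
  have "(cmod (B$1$1 * 1 + B$1$2 * 0))^2 + (cmod (B$2$1 * 1 + B$2$2 * 0))^2 \<le> (cmod 1)^2 + (cmod 0)^2"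
    by (rule onorm_app2[OF nB])
  then have "(cmod (B$1$1))^2 + (cmod (B$2$1))^2 \<le> 1" by simp
  then have "(cmod (B$1$1))^2 \<le> 1" using zero_le_power2[of "cmod (B$2$1)"] by linarith
  then have b11: "cmod (B$1$1) \<le> 1" by (simp add: abs_square_le_1)
  define u1 where "u1 = B$1$2 * w"
  define u2 where "u2 = 1 - B$1$1 * z"
  have "cmod (B$1$1) * cmod z \<le> 1 * cmod z" using b11 by (intro mult_right_mono) auto
  then have "cmod (B$1$1 * z) < 1" using z by (simp add: norm_mult)
  then have u2: "u2 \<noteq> 0" unfolding u2_def by auto
  have c1: "B$1$1 * (z * u1) + B$1$2 * (w * u2) = u1" unfolding u1_def u2_def by (simp add: algebra_simps)
  have c2: "B$2$1 * (z * u1) + B$2$2 * (w * u2) = u2"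
  proof -
    have h: "u2 = w * (B$2$2 - det B * z)" using e unfolding u2_def by (simp add: algebra_simps)
    have "B$2$1 * (z * u1) + B$2$2 * (w * u2) = w * (B$2$2 - det B * z)"
      unfolding u1_def u2_def det_2 by (simp add: algebra_simps)
    then show ?thesis using h by simp
  qed
  have "(cmod u1)^2 + (cmod u2)^2 \<le> (cmod (z * u1))^2 + (cmod (w * u2))^2"
    using onorm_app2[OF nB, of "z * u1" "w * u2"] unfolding c1 c2 .
  moreover have "(cmod (z * u1))^2 \<le> (cmod u1)^2"
    unfolding norm_mult power_mult_distrib using z
    by (simp add: mult_left_le_one_le power_le_one)
  moreover have "(cmod (w * u2))^2 < (cmod u2)^2"
  proof -
    have "(cmod w)^2 < 1" using w by (simp add: abs_square_less_1)
    moreover have "(cmod u2)^2 > 0" using u2 by simp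
    ultimately show ?thesis unfolding norm_mult power_mult_distrib by simp
  qed
  ultimately show False by linarith
qed


definition E2 :: "complex \<Rightarrow> complex \<Rightarrow> complex \<Rightarrow> bool" where
  "E2 a b p \<longleftrightarrow> (\<forall>z\<in>ball 0 1. \<forall>w\<in>ball 0 1. 1 - a*z - b*w + p*z*w \<noteq> 0)"

definition E2b :: "complex \<Rightarrow> complex \<Rightarrow> complex \<Rightarrow> bool" where
  "E2b a b p \<longleftrightarrow> (\<forall>w\<in>ball 0 1. b*w \<noteq> 1 \<and> cmod (p*w - a) \<le> cmod (b*w - 1))"

definition E5 :: "complex \<Rightarrow> complex \<Rightarrow> complex \<Rightarrow> bool" where
  "E5 a b p \<longleftrightarrow> (cmod a)^2 - (cmod b)^2 + (cmod p)^2 + 2 * cmod (b - cnj a * p) \<le> 1 \<and> cmod b \<le> 1"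

lemma E2_sym1: "E2 a b p \<Longrightarrow> E2 b a p"
  unfolding E2_def
proof (intro ballI)
  fix z w :: complex assume E: "\<forall>z\<in>ball 0 1. \<forall>w\<in>ball 0 1. 1 - a*z - b*w + p*z*w \<noteq> 0"
    and z: "z \<in> ball 0 1" and w: "w \<in> ball 0 1"
  have neq: "1 - a*w - b*z + p*w*z \<noteq> 0" using E z w by blast
  have eq: "1 - b*z - a*w + p*z*w = 1 - a*w - b*z + p*w*z" by (simp add: algebra_simps)
  show "1 - b*z - a*w + p*z*w \<noteq> 0" using neq eq by metis
qed

lemma E2_sym: "E2 a b p \<longleftrightarrow> E2 b a p"
  using E2_sym1 by blast

lemma E2_iff_E2b: "E2 a b p \<longleftrightarrow> E2b a b p"
proof
  assume E: "E2 a b p"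
  show "E2b a b p" unfolding E2b_def
  proof
    fix w :: complex assume w: "w \<in> ball 0 1"
    have z0: "(0::complex) \<in> ball 0 1" by simp
    have "1 - a*0 - b*w + p*0*w \<noteq> 0" using E w z0 unfolding E2_def by blast
    then have bw: "b*w \<noteq> 1" by simp
    have "cmod (p*w - a) \<le> cmod (b*w - 1)"
    proof (rule ccontr)
      assume "\<not> ?thesis"
      then have lt: "cmod (b*w - 1) < cmod (p*w - a)" by simp
      then have nz: "a - p*w \<noteq> 0" by auto
      define z where "z = (1 - b*w) / (a - p*w)"
      have "cmod z = cmod (b*w - 1) / cmod (p*w - a)"
        unfolding z_def norm_divide by (simp add: norm_minus_commute)
      also have "\<dots> < 1" using lt by (simp add: divide_less_eq)
      finally have "z \<in> ball 0 1" by simp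
      moreover have "1 - a*z - b*w + p*z*w = 0"
      proof -
        have "1 - a*z - b*w + p*z*w = (1 - b*w) - z * (a - p*w)" by (simp add: algebra_simps)
        also have "\<dots> = 0" unfolding z_def using nz by simp
        finally show ?thesis .
      qed
      ultimately show False using E w unfolding E2_def by blast
    qed
    then show "b * w \<noteq> 1 \<and> cmod (p * w - a) \<le> cmod (b * w - 1)" using bw by simp
  qed
next
  assume E: "E2b a b p"
  show "E2 a b p" unfolding E2_def
  proof (intro ballI)
    fix z w :: complex assume z: "z \<in> ball 0 1" and w: "w \<in> ball 0 1"
    have bw: "b*w \<noteq> 1" and le: "cmod (p*w - a) \<le> cmod (b*w - 1)" using E w unfolding E2b_def by auto
    have pos: "cmod (b*w - 1) > 0" using bw by simp
    have "cmod (z * (a - p*w)) = cmod z * cmod (p*w - a)" by (simp add: norm_mult norm_minus_commute)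
    also have "\<dots> \<le> cmod z * cmod (b*w - 1)" using le by (simp add: mult_left_mono)
    also have "\<dots> < cmod (1 - b*w)" using z pos by (simp add: norm_minus_commute)
    finally have "cmod (z * (a - p*w)) < cmod (1 - b*w)" .
    then have "(1 - b*w) - z * (a - p*w) \<noteq> 0" by auto
    moreover have "1 - a*z - b*w + p*z*w = (1 - b*w) - z * (a - p*w)" by (simp add: algebra_simps)
    ultimately show "1 - a*z - b*w + p*z*w \<noteq> 0" by metis
  qed
qed

lemma limit_quad:
  fixes c0 c1 c2 :: real
  assumes "\<And>r. 0 \<le> r \<Longrightarrow> r < 1 \<Longrightarrow> 0 \<le> c0 + c1 * r + c2 * r^2"
  shows "0 \<le> c0 + c1 + c2"
proof -
  have "((\<lambda>r. c0 + c1 * r + c2 * r^2) \<longlongrightarrow> c0 + c1 * 1 + c2 * 1^2) (at_left (1::real))"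
    by (intro tendsto_intros)
  moreover have "eventually (\<lambda>r. 0 \<le> c0 + c1 * r + c2 * r^2) (at_left (1::real))"
    unfolding eventually_at_left[of 0 "1::real", simplified] using assms
    by (intro exI[of _ 0]) auto
  ultimately have "0 \<le> c0 + c1 * 1 + c2 * 1^2"
    by (intro tendsto_lowerbound) auto
  then show ?thesis by simp
qed

lemma E2b_imp_E5:
  assumes E: "E2b a b p"
  shows "E5 a b p"
proof -
  have b1: "cmod b \<le> 1"
  proof (rule ccontr)
    assume "\<not> ?thesis"
    then have "cmod (1/b) < 1" "b \<noteq> 0" by (auto simp: norm_divide divide_less_eq)
    then show False using E unfolding E2b_def by (metis mem_ball_0 right_inverse divide_inverse mult_1)
  qed
  define d where "d = b - p * cnj a"
  define Y where "Y = cmod d"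
  define zeta where "zeta = (if d = 0 then 1 else cnj d / of_real (cmod d))"
  have zeta1: "cmod zeta = 1" unfolding zeta_def by (auto simp: norm_divide)
  have zd: "Re (zeta * d) = Y"
  proof (cases "d = 0")
    case True then show ?thesis unfolding Y_def zeta_def by simp
  next
    case False
    have "zeta * d = (d * cnj d) / of_real (cmod d)" using False unfolding zeta_def by (simp add: mult.commute)
    also have "\<dots> = of_real ((cmod d)^2 / cmod d)" by (simp add: complex_norm_square[symmetric])
    also have "\<dots> = of_real (cmod d)" using False by (simp add: power2_eq_square)
    finally show ?thesis unfolding Y_def by simp
  qed
  have key: "0 \<le> (1 - (cmod a)^2) + (- 2 * Y) * r + ((cmod b)^2 - (cmod p)^2) * r^2" if r: "0 \<le> r" "r < 1" for r :: real
  proof -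
    define w where "w = of_real r * zeta"
    have wb: "w \<in> ball 0 1" using r zeta1 unfolding w_def by (simp add: norm_mult)
    then have le: "cmod (p*w - a) \<le> cmod (b*w - 1)" using E unfolding E2b_def by blast
    then have le2: "(cmod (p*w - a))^2 \<le> (cmod (b*w - 1))^2" by (simp add: power_mono)
    have idn: "(cmod (b*w - 1))^2 - (cmod (p*w - a))^2 = ((cmod b)^2 - (cmod p)^2) * (cmod w)^2 + 1 - (cmod a)^2 - 2 * Re (w * d)"
    proof -
      have "complex_of_real ((cmod (b*w - 1))^2 - (cmod (p*w - a))^2) = complex_of_real (((cmod b)^2 - (cmod p)^2) * (cmod w)^2 + 1 - (cmod a)^2) - ((w * d) + cnj (w * d))"
        unfolding d_def of_real_diff of_real_mult of_real_power of_real_add of_real_numeral of_real_1 cns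
        unfolding complex_cnj_add complex_cnj_mult complex_cnj_cnj complex_cnj_diff complex_cnj_one
        by (simp add: algebra_simps)
      also have "\<dots> = complex_of_real (((cmod b)^2 - (cmod p)^2) * (cmod w)^2 + 1 - (cmod a)^2 - 2 * Re (w * d))"
        unfolding complex_add_cnj by simp
      finally show ?thesis by (simp only: of_real_eq_iff)
    qed
    have "cmod w = r" unfolding w_def using r zeta1 by (simp add: norm_mult)
    moreover have "Re (w * d) = r * Y" unfolding w_def using zd by (simp add: mult.assoc)
    ultimately have "(cmod (b*w - 1))^2 - (cmod (p*w - a))^2 = (1 - (cmod a)^2) + (- 2 * Y) * r + ((cmod b)^2 - (cmod p)^2) * r^2"
      using idn by (simp add: algebra_simps)
    then show ?thesis using le2 by linarith
  qed
  have "0 \<le> (1 - (cmod a)^2) + (- 2 * Y) + ((cmod b)^2 - (cmod p)^2)"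
    by (rule limit_quad) (use key in auto)
  moreover have "cmod (b - cnj a * p) = Y" unfolding Y_def d_def by (simp add: mult.commute)
  ultimately show ?thesis unfolding E5_def using b1 by linarith
qed


lemma lb1: "cmod (b - cnj a * p) \<ge> cmod a * cmod p - cmod b"
  using norm_triangle_ineq2[of "cnj a * p" b] by (simp add: norm_mult norm_minus_commute)
lemma lb2: "cmod (b - cnj a * p) \<ge> cmod b - cmod a * cmod p"
  using norm_triangle_ineq2[of b "cnj a * p"] by (simp add: norm_mult)

lemma sq_le_abs: fixes x y :: real shows "x^2 \<le> y^2 \<Longrightarrow> 0 \<le> y \<Longrightarrow> \<bar>x\<bar> \<le> y"
  by (metis abs_le_square_iff abs_of_nonneg)

lemma XY_id: "(cmod (a - cnj b * p))^2 - (cmod (b - cnj a * p))^2 = ((cmod a)^2 - (cmod b)^2) * (1 - (cmod p)^2)"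
proof -
  have "complex_of_real ((cmod (a - cnj b * p))^2 - (cmod (b - cnj a * p))^2) = complex_of_real (((cmod a)^2 - (cmod b)^2) * (1 - (cmod p)^2))"
    unfolding of_real_diff of_real_mult of_real_power of_real_add of_real_numeral of_real_1 cns
    unfolding complex_cnj_add complex_cnj_mult complex_cnj_cnj complex_cnj_diff complex_cnj_one
    by (simp add: algebra_simps)
  then show ?thesis by (simp only: of_real_eq_iff)
qed

lemma b_id: "b * of_real (1 - (cmod p)^2) = (b - cnj a * p) + cnj (a - cnj b * p) * p"
proof -
  have "(b - cnj a * p) + cnj (a - cnj b * p) * p = b - b * (p * cnj p)" by (simp add: algebra_simps)
  then show ?thesis by (simp add: pcnj algebra_simps)
qed

lemma E5_imp_Hc:
  assumes E: "E5 a b p"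
  shows "Hc a b p"
proof -
  define r where "r = cmod a"
  define s where "s = cmod b"
  define t where "t = cmod p"
  define X where "X = cmod (a - cnj b * p)"
  define Y where "Y = cmod (b - cnj a * p)"
  have nn: "r \<ge> 0" "s \<ge> 0" "t \<ge> 0" "X \<ge> 0" "Y \<ge> 0" unfolding r_def s_def t_def X_def Y_def by auto
  have e5: "r^2 - s^2 + t^2 + 2 * Y \<le> 1" "s \<le> 1" using E unfolding E5_def r_def s_def t_def Y_def by auto
  have l1: "Y \<ge> r * t - s" "Y \<ge> s - r * t" using lb1 lb2 unfolding r_def s_def t_def Y_def by auto
  have "(r + t)^2 \<le> (1 + s)^2"
  proof -
    have "(r + t)^2 = r^2 + t^2 + 2 * (r * t)" by (simp add: power2_eq_square algebra_simps)
    moreover have "(1 + s)^2 = 1 + 2 * s + s^2" by (simp add: power2_eq_square algebra_simps)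
    ultimately show ?thesis using e5 l1 by linarith
  qed
  from power2_le_imp_le[OF this] have s1: "r + t \<le> 1 + s" using nn by simp
  have "(r - t)^2 \<le> (1 - s)^2"
  proof -
    have "(r - t)^2 = r^2 + t^2 - 2 * (r * t)" by (simp add: power2_eq_square algebra_simps)
    moreover have "(1 - s)^2 = 1 - 2 * s + s^2" by (simp add: power2_eq_square algebra_simps)
    ultimately show ?thesis using e5 l1 by linarith
  qed
  from sq_le_abs[OF this] have s2: "\<bar>r - t\<bar> \<le> 1 - s" using e5 by simp
  have t1: "t \<le> 1" and r1: "r \<le> 1" using s1 s2 by auto
  have id: "X^2 - Y^2 = (r^2 - s^2) * (1 - t^2)" using XY_id unfolding X_def Y_def r_def s_def t_def .
  have main: "X + Y \<le> 1 - t^2"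
  proof (cases "t < 1")
    case True
    have t2: "t^2 < 1" using True nn by (simp add: abs_square_less_1)
    have "X^2 \<le> (1 - t^2 - Y)^2"
    proof -
      have "(r^2 - s^2) * (1 - t^2) \<le> (1 - t^2 - 2 * Y) * (1 - t^2)"
        using e5 t2 by (intro mult_right_mono) auto
      moreover have "(1 - t^2 - Y)^2 = Y^2 + (1 - t^2 - 2 * Y) * (1 - t^2)"
        by (simp add: power2_eq_square algebra_simps)
      ultimately show ?thesis using id by linarith
    qed
    have Yle: "Y \<le> 1 - t^2"
    proof (rule ccontr)
      assume "\<not> ?thesis"
      then have Yg: "Y > 1 - t^2" by simp
      have "\<bar>X\<bar> \<le> \<bar>1 - t^2 - Y\<bar>" using \<open>X^2 \<le> (1 - t^2 - Y)^2\<close> by (simp only: abs_le_square_iff)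
      then have Xle: "X \<le> Y - (1 - t^2)" using Yg nn by simp
      have "s * (1 - t^2) = cmod (b * of_real (1 - t^2))" using t2 nm[of "1 - t^2" b] unfolding s_def by simp
      also have "\<dots> = cmod ((b - cnj a * p) + cnj (a - cnj b * p) * p)" unfolding t_def using b_id[of b p a] by metis
      also have "\<dots> \<ge> Y - t * X"
      proof -
        have "cmod (cnj (a - cnj b * p) * p) = t * X" unfolding X_def t_def norm_mult complex_mod_cnj by simp
        then show ?thesis using norm_diff_ineq[of "b - cnj a * p" "cnj (a - cnj b * p) * p"]
          unfolding Y_def by linarith
      qed
      finally have "s * (1 - t^2) \<ge> Y - t * X" .
      moreover have "t * X \<le> t * (Y - (1 - t^2))" using Xle nn by (intro mult_left_mono) auto
      moreover have "Y * (1 - t) > (1 - t^2) * (1 - t)" using Yg True by (intro mult_strict_right_mono) auto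
      moreover have "Y - t * (Y - (1 - t^2)) = Y * (1 - t) + t * (1 - t^2)" by (simp add: algebra_simps)
      moreover have "(1 - t^2) * (1 - t) + t * (1 - t^2) = 1 - t^2" by (simp add: algebra_simps)
      ultimately have "s * (1 - t^2) > 1 - t^2" by linarith
      then have "s > 1" using t2 by (simp add: mult_less_cancel_right2)
      then show False using e5 by simp
    qed
    have "\<bar>X\<bar> \<le> \<bar>1 - t^2 - Y\<bar>" using \<open>X^2 \<le> (1 - t^2 - Y)^2\<close> by (simp only: abs_le_square_iff)
    then show ?thesis using Yle nn by simp
  next
    case False
    then have t1': "t = 1" using t1 by simp
    then have "r = s" using s1 s2 by auto
    then have "Y = 0" using e5 t1' nn by auto
    then have "X = 0" using id t1' nn by simp
    then show ?thesis using \<open>Y = 0\<close> t1' by simp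
  qed
  show ?thesis unfolding Hc_def using main t1 r1 e5
    unfolding X_def Y_def r_def s_def t_def by (simp add: norm_minus_commute)
qed


lemma E6_E4_real:
  fixes r s t X Z :: real
  assumes nn: "r \<ge> 0" "s \<ge> 0" "t \<ge> 0" "X \<ge> 0" "Z \<ge> 0"
    and z1: "Z \<ge> t - r * s" and z2: "Z \<ge> r * s - t"
    and id: "X^2 = Z^2 + (1 - s^2) * (r^2 - t^2)"
    and t1: "t \<le> 1" and e6: "r^2 + s^2 - t^2 + 2 * Z \<le> 1"
  shows "X + Z \<le> 1 - s^2 \<and> r \<le> 1 \<and> s \<le> 1"
proof -
  have "(r - s)^2 \<le> (1 - t)^2"
  proof -
    have "(r - s)^2 = r^2 + s^2 - 2 * (r * s)" "(1 - t)^2 = 1 - 2 * t + t^2" by (simp_all add: power2_eq_square algebra_simps)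
    then show ?thesis using e6 z1 by linarith
  qed
  from sq_le_abs[OF this] have h1: "\<bar>r - s\<bar> \<le> 1 - t" using t1 by simp
  have "(r + s)^2 \<le> (1 + t)^2"
  proof -
    have "(r + s)^2 = r^2 + s^2 + 2 * (r * s)" "(1 + t)^2 = 1 + 2 * t + t^2" by (simp_all add: power2_eq_square algebra_simps)
    then show ?thesis using e6 z2 by linarith
  qed
  from power2_le_imp_le[OF this] have h2: "r + s \<le> 1 + t" using nn by simp
  have s1: "s \<le> 1" and r1: "r \<le> 1" using h1 h2 by auto
  have s2: "s^2 \<le> 1" using s1 nn by (simp add: power_le_one)
  have Zle: "Z \<le> 1 - s^2"
  proof (rule ccontr)
    assume "\<not> ?thesis"
    then have c: "1 - s^2 < t^2 - r^2" using e6 by linarith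
    show False
    proof (cases "t \<ge> r * s")
      case True
      have "t^2 > r^2" using c s2 by linarith
      then have tr: "t > r" using nn by (simp add: power_less_imp_less_base)
      have "s \<le> r + (1 - t)" using h1 by linarith
      then have "s^2 \<le> (r + (1 - t))^2" using nn by (simp add: power_mono)
      moreover have "(r + (1 - t))^2 = r^2 + 2 * r - 2 * (r * t) + 1 - 2 * t + t^2" by (simp add: power2_eq_square algebra_simps)
      ultimately have "t - t^2 < r - r * t" using c by linarith
      moreover have "t * (1 - t) = t - t^2" "r * (1 - t) = r - r * t" by (simp_all add: power2_eq_square algebra_simps)
      ultimately have "t * (1 - t) < r * (1 - t)" by simp
      moreover have "r * (1 - t) \<le> t * (1 - t)" using tr t1 by (intro mult_right_mono) auto
      ultimately show False by simp
    next
      case False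
      then have "t < r * s" by simp
      then have "t^2 < (r * s)^2" using nn by (simp add: power_strict_mono)
      moreover have "s^2 * (1 + r^2) \<le> 1 * (1 + r^2)" using s2 by (intro mult_right_mono) auto
      ultimately have "s^2 + t^2 < 1 + r^2" by (simp add: power_mult_distrib algebra_simps)
      then show False using c by simp
    qed
  qed
  have "X^2 \<le> (1 - s^2 - Z)^2"
  proof -
    have "(1 - s^2) * (r^2 - t^2) \<le> (1 - s^2) * (1 - s^2 - 2 * Z)" using e6 s2 by (intro mult_left_mono) auto
    moreover have "(1 - s^2 - Z)^2 = Z^2 + (1 - s^2) * (1 - s^2 - 2 * Z)" by (simp add: power2_eq_square algebra_simps)
    ultimately show ?thesis using id by linarith
  qed
  from power2_le_imp_le[OF this] have "X \<le> 1 - s^2 - Z" using Zle by simp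
  then show ?thesis using r1 s1 by simp
qed

lemma E4_E6_real:
  fixes r s t X Z :: real
  assumes nn: "r \<ge> 0" "s \<ge> 0" "t \<ge> 0" "X \<ge> 0" "Z \<ge> 0"
    and z1: "Z \<ge> t - r * s" and z2: "Z \<ge> r * s - t"
    and x1: "X \<ge> r - s * t" and x2: "X \<ge> s * t - r"
    and id: "X^2 = Z^2 + (1 - s^2) * (r^2 - t^2)"
    and s1: "s < 1" and e4: "X + Z \<le> 1 - s^2"
  shows "t \<le> 1 \<and> r^2 + s^2 - t^2 + 2 * Z \<le> 1"
proof -
  have u: "1 - s^2 > 0" using s1 nn by (simp add: abs_square_less_1)
  have "X^2 \<le> (1 - s^2 - Z)^2" using e4 nn by (intro power_mono) auto
  moreover have "(1 - s^2 - Z)^2 = Z^2 + (1 - s^2) * (1 - s^2 - 2 * Z)" by (simp add: power2_eq_square algebra_simps)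
  ultimately have "(1 - s^2) * (r^2 - t^2) \<le> (1 - s^2) * (1 - s^2 - 2 * Z)" using id by linarith
  then have m: "r^2 - t^2 \<le> 1 - s^2 - 2 * Z" using u by (simp add: mult_le_cancel_left_pos)
  have "(t - r) * (1 + s) \<le> (1 - s) * (1 + s)"
  proof -
    have "(t - r) * (1 + s) = (t - r * s) + (s * t - r)" by (simp add: algebra_simps)
    moreover have "(1 - s) * (1 + s) = 1 - s^2" by (simp add: power2_eq_square algebra_simps)
    ultimately show ?thesis using z1 x2 e4 by linarith
  qed
  then have a1: "t - r \<le> 1 - s" using nn by (simp add: mult_le_cancel_right_pos add_pos_nonneg)
  have "(r + t) * (1 - s) \<le> (1 + s) * (1 - s)"
  proof -
    have "(r + t) * (1 - s) = (r - s * t) + (t - r * s)" by (simp add: algebra_simps)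
    moreover have "(1 + s) * (1 - s) = 1 - s^2" by (simp add: power2_eq_square algebra_simps)
    ultimately show ?thesis using z1 x1 e4 by linarith
  qed
  then have a2: "r + t \<le> 1 + s" using s1 by (simp add: mult_le_cancel_right_pos)
  show ?thesis using a1 a2 m by linarith
qed


definition E4 :: "complex \<Rightarrow> complex \<Rightarrow> complex \<Rightarrow> bool" where
  "E4 a b p \<longleftrightarrow> cmod (a - cnj b * p) + cmod (a * b - p) \<le> 1 - (cmod b)^2 \<and> (a * b = p \<longrightarrow> cmod a \<le> 1)"

lemma XZ_id: "(cmod (a - cnj b * p))^2 = (cmod (a * b - p))^2 + (1 - (cmod b)^2) * ((cmod a)^2 - (cmod p)^2)"
proof -
  have "complex_of_real ((cmod (a - cnj b * p))^2) = complex_of_real ((cmod (a * b - p))^2 + (1 - (cmod b)^2) * ((cmod a)^2 - (cmod p)^2))"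
    unfolding of_real_diff of_real_mult of_real_power of_real_add of_real_numeral of_real_1 cns
    unfolding complex_cnj_add complex_cnj_mult complex_cnj_cnj complex_cnj_diff complex_cnj_one
    by (simp add: algebra_simps)
  then show ?thesis by (simp only: of_real_eq_iff)
qed

lemma E4_iff_E6: "E4 a b p \<longleftrightarrow> E6 a b p"
proof -
  define r where "r = cmod a"
  define s where "s = cmod b"
  define t where "t = cmod p"
  define X where "X = cmod (a - cnj b * p)"
  define Z where "Z = cmod (a * b - p)"
  have nn: "r \<ge> 0" "s \<ge> 0" "t \<ge> 0" "X \<ge> 0" "Z \<ge> 0" unfolding r_def s_def t_def X_def Z_def by auto
  have z1: "Z \<ge> t - r * s"
    using norm_triangle_ineq2[of p "a * b"] unfolding Z_def t_def r_def s_def by (simp add: norm_mult norm_minus_commute)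
  have z2: "Z \<ge> r * s - t"
    using norm_triangle_ineq2[of "a * b" p] unfolding Z_def t_def r_def s_def by (simp add: norm_mult)
  have x1: "X \<ge> r - s * t"
    using norm_triangle_ineq2[of a "cnj b * p"] unfolding X_def t_def r_def s_def by (simp add: norm_mult)
  have x2: "X \<ge> s * t - r"
    using norm_triangle_ineq2[of "cnj b * p" a] unfolding X_def t_def r_def s_def by (simp add: norm_mult norm_minus_commute)
  have id: "X^2 = Z^2 + (1 - s^2) * (r^2 - t^2)" using XZ_id unfolding X_def Z_def r_def s_def t_def .
  have E4': "E4 a b p \<longleftrightarrow> X + Z \<le> 1 - s^2 \<and> (Z = 0 \<longrightarrow> r \<le> 1)"
    unfolding E4_def X_def Z_def s_def r_def by simp
  have E6': "E6 a b p \<longleftrightarrow> t \<le> 1 \<and> r^2 + s^2 - t^2 + 2 * Z \<le> 1"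
    unfolding E6_def Z_def s_def r_def t_def by simp
  show ?thesis
  proof
    assume "E4 a b p"
    then have e4: "X + Z \<le> 1 - s^2" and cl: "Z = 0 \<longrightarrow> r \<le> 1" using E4' by auto
    show "E6 a b p"
    proof (cases "s < 1")
      case True
      show ?thesis using E4_E6_real[OF nn z1 z2 x1 x2 id True e4] E6' by simp
    next
      case False
      have "s^2 \<le> 1" using e4 nn by linarith
      then have s1: "s = 1" using False nn by (simp add: power_le_one_iff)
      then have "Z = 0" "X = 0" using e4 nn by auto
      then have "r \<le> 1" "a * b = p" using cl unfolding Z_def by auto
      then have "t = r" unfolding t_def r_def using s1 s_def by (auto simp: norm_mult)
      then show ?thesis using E6' \<open>Z = 0\<close> s1 \<open>r \<le> 1\<close> by simp
    qed
  next
    assume "E6 a b p"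
    then have t1: "t \<le> 1" and e6: "r^2 + s^2 - t^2 + 2 * Z \<le> 1" using E6' by auto
    show "E4 a b p" using E6_E4_real[OF nn z1 z2 id t1 e6] E4' by simp
  qed
qed


lemma bw_iff: "(\<forall>w\<in>ball 0 1. b * w \<noteq> 1) \<longleftrightarrow> cmod b \<le> 1"
proof
  assume H: "\<forall>w\<in>ball 0 1. b * w \<noteq> 1"
  show "cmod b \<le> 1"
  proof (rule ccontr)
    assume "\<not> ?thesis"
    then have "cmod (1/b) < 1" "b \<noteq> 0" by (auto simp: norm_divide divide_less_eq)
    then show False using H by (metis mem_ball_0 right_inverse divide_inverse mult_1)
  qed
next
  assume b: "cmod b \<le> 1"
  show "\<forall>w\<in>ball 0 1. b * w \<noteq> 1"
  proof
    fix w :: complex assume "w \<in> ball 0 1"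
    then have "cmod w < 1" by simp
    then have "cmod b * cmod w < 1"
      using b by (metis mult_le_cancel_right1 norm_ge_zero order_le_less_trans mult.commute le_less_trans mult_left_le_one_le)
    then show "b * w \<noteq> 1" by (metis norm_mult norm_one less_irrefl)
  qed
qed

lemma Phi_lemma:
  fixes n j :: nat and y :: "nat \<Rightarrow> complex" and C :: real
  assumes C: "C = real (n choose j)" "C > 0" and ya: "y j = of_real C * a" and yb: "y (n - j) = of_real C * b"
  shows "(Phi_Hinf n j y q \<le> 1 \<and> (y j * y (n - j) = of_real (C^2) * q \<longrightarrow> cmod (y (n - j)) \<le> C))
         \<longleftrightarrow> E2b a b q"
proof -
  have c: "(of_nat (n choose j) :: complex) = of_real C" using C by simp
  have Cn: "complex_of_real C \<noteq> 0" using C by simp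
  have deg: "y j * y (n - j) = (of_nat (n choose j))^2 * q \<longleftrightarrow> a * b = q"
    unfolding c ya yb using Cn by (auto simp: power2_eq_square algebra_simps)
  have deg2: "y j * y (n - j) = of_real (C^2) * q \<longleftrightarrow> a * b = q"
    using deg c by (simp add: of_real_power)
  have nb: "cmod (y (n - j)) \<le> C \<longleftrightarrow> cmod b \<le> 1" unfolding yb using C by (simp add: norm_mult)
  have ball_ne: "(0::complex) \<in> ball 0 1" by simp
  have Hinf: "Phi_Hinf n j y q \<le> 1 \<longleftrightarrow> (\<forall>z\<in>ball 0 1. Phi n j y q z \<noteq> None \<and> cmod (the (Phi n j y q z)) \<le> 1)"
    unfolding Phi_Hinf_def by (auto simp: SUP_le_iff)
  show ?thesis
  proof (cases "a * b = q")
    case True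
    have "Phi n j y q z = Some a" for z
      unfolding Phi_def Let_def using True deg ya Cn c by simp
    then have "Phi_Hinf n j y q \<le> 1 \<longleftrightarrow> cmod a \<le> 1" unfolding Hinf using ball_ne by (metis option.distinct(1) option.sel)
    moreover have "E2b a b q \<longleftrightarrow> cmod b \<le> 1 \<and> cmod a \<le> 1"
    proof
      assume E: "E2b a b q"
      then have "cmod b \<le> 1" unfolding E2b_def using bw_iff by blast
      moreover have "cmod (q * 0 - a) \<le> cmod (b * 0 - 1)" using E ball_ne unfolding E2b_def by blast
      ultimately show "cmod b \<le> 1 \<and> cmod a \<le> 1" by simp
    next
      assume H: "cmod b \<le> 1 \<and> cmod a \<le> 1"
      show "E2b a b q" unfolding E2b_def
      proof
        fix w :: complex assume w: "w \<in> ball 0 1"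
        have "b * w \<noteq> 1" using H bw_iff w by blast
        moreover have "cmod (q * w - a) = cmod a * cmod (b * w - 1)"
          using True by (metis norm_mult right_diff_distrib mult.assoc mult.commute mult_1_right mult.left_commute)
        moreover have "cmod a * cmod (b * w - 1) \<le> 1 * cmod (b * w - 1)" using H by (intro mult_right_mono) auto
        ultimately show "b * w \<noteq> 1 \<and> cmod (q * w - a) \<le> cmod (b * w - 1)" by simp
      qed
    qed
    ultimately show ?thesis using deg2 True nb by auto
  next
    case False
    have ph: "Phi n j y q z = (if b * z \<noteq> 1 then Some ((q * z - a) / (b * z - 1)) else None)" for z
    proof -
      have e1: "y (n - j) * z \<noteq> of_nat (n choose j) \<longleftrightarrow> b * z \<noteq> 1" unfolding c yb using Cn
        by (metis mult.assoc mult_cancel_left mult.right_neutral)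
      have e2: "(of_nat (n choose j) * q * z - y j) / (y (n - j) * z - of_nat (n choose j)) = (q * z - a) / (b * z - 1)"
        unfolding c ya yb using Cn
        by (metis (no_types, lifting) mult.assoc right_diff_distrib mult_divide_mult_cancel_left_if mult.right_neutral)
      show ?thesis unfolding Phi_def Let_def using False deg e1 e2 by simp
    qed
    have "Phi_Hinf n j y q \<le> 1 \<longleftrightarrow> E2b a b q"
      unfolding Hinf E2b_def ph
      by (auto simp: norm_divide divide_le_eq_1 norm_minus_commute)
    then show ?thesis using deg2 False by simp
  qed
qed


lemma E7_imp_E1:
  assumes p: "cmod p \<le> 1" and m: "cmod (a - cnj b * p) + cmod (b - cnj a * p) \<le> 1 - (cmod p)^2"
    and c: "cmod p = 1 \<longrightarrow> cmod a \<le> 1 \<and> cmod b \<le> 1"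
  shows "a = cb a b p + cnj (cb b a p) * p \<and> cmod (cb a b p) + cmod (cb b a p) \<le> 1"
proof (cases "cmod p < 1")
  case True
  define D where "D = 1 - (cmod p)^2"
  have D: "D > 0" using True unfolding D_def
    by (metis abs_norm_cancel abs_square_less_1 diff_gt_0_iff_gt)
  have "cb a b p + cnj (cb b a p) * p = ((a - cnj b * p) + cnj (b - cnj a * p) * p) / of_real D"
    using True by (simp add: cb_def D_def add_divide_distrib)
  also have "(a - cnj b * p) + cnj (b - cnj a * p) * p = a * (1 - p * cnj p)"
    by (simp add: algebra_simps)
  also have "\<dots> = a * of_real D" by (simp add: pcnj D_def)
  finally have e: "cb a b p + cnj (cb b a p) * p = a" using D by simp
  have "cmod (cb a b p) + cmod (cb b a p) = (cmod (a - cnj b * p) + cmod (b - cnj a * p)) / D"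
    using True D nd[OF D] by (simp add: cb_def D_def[symmetric] add_divide_distrib)
  also have "\<dots> \<le> 1" using m D unfolding D_def by simp
  finally show ?thesis using e by simp
next
  case False
  then have p1: "cmod p = 1" using p by simp
  then have "cmod (a - cnj b * p) + cmod (b - cnj a * p) \<le> 0" using m by simp
  then have e1: "a = cnj b * p" by (smt (verit) norm_ge_zero right_minus_eq zero_less_norm_iff)
  have "cmod (cb a b p) + cmod (cb b a p) = (cmod a + cmod b) / 2"
    using False by (simp add: cb_def norm_divide add_divide_distrib)
  also have "\<dots> \<le> 1" using c p1 by simp
  finally have "cmod (cb a b p) + cmod (cb b a p) \<le> 1" .
  moreover have "cb a b p + cnj (cb b a p) * p = a"
    using False e1 by (simp add: cb_def)
  ultimately show ?thesis by simp
qed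

lemma Hc_E1: "Hc a b p \<Longrightarrow> a = cb a b p + cnj (cb b a p) * p \<and> cmod (cb a b p) + cmod (cb b a p) \<le> 1"
  by (rule E7_imp_E1) (auto simp: Hc_def)

lemma E7_iff_Hc:
  "(cmod (a - cnj b * p) + cmod (b - cnj a * p) \<le> 1 - (cmod p)^2 \<and> (cmod p = 1 \<longrightarrow> cmod a \<le> 1)) \<longleftrightarrow> Hc a b p"
proof
  assume H: "cmod (a - cnj b * p) + cmod (b - cnj a * p) \<le> 1 - (cmod p)^2 \<and> (cmod p = 1 \<longrightarrow> cmod a \<le> 1)"
  have "(cmod p)^2 \<le> 1" using H by (smt (verit) norm_ge_zero)
  then have p: "cmod p \<le> 1" by (simp add: abs_square_le_1)
  have c: "cmod p = 1 \<longrightarrow> cmod a \<le> 1 \<and> cmod b \<le> 1"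
  proof
    assume p1: "cmod p = 1"
    then have "cmod (a - cnj b * p) + cmod (b - cnj a * p) \<le> 0" using H by simp
    then have "b = cnj a * p" by (smt (verit) norm_ge_zero right_minus_eq zero_less_norm_iff)
    then have "cmod b = cmod a" using p1 by (simp add: norm_mult)
    then show "cmod a \<le> 1 \<and> cmod b \<le> 1" using H p1 by simp
  qed
  have e1: "a = cb a b p + cnj (cb b a p) * p \<and> cmod (cb a b p) + cmod (cb b a p) \<le> 1"
    using E7_imp_E1[OF p _ c] H by blast
  have e2: "b = cb b a p + cnj (cb a b p) * p"
    using E7_imp_E1[of p b a] p c H by (auto simp: add.commute)
  show "Hc a b p" using E1_imp_Hc[of a "cb a b p" "cb b a p" p b] e1 e2 p by simp
next
  assume "Hc a b p"
  then show "(cmod (a - cnj b * p) + cmod (b - cnj a * p) \<le> 1 - (cmod p)^2 \<and> (cmod p = 1 \<longrightarrow> cmod a \<le> 1))"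
    unfolding Hc_def by simp
qed

lemma E8_iff_Hc:
  "(\<exists>B :: complex^2^2. onorm (\<lambda>x. B *v x) \<le> 1 \<and> B$1$1 = a \<and> B$2$2 = b \<and> det B = p) \<longleftrightarrow> Hc a b p"
proof
  assume "\<exists>B :: complex^2^2. onorm (\<lambda>x. B *v x) \<le> 1 \<and> B$1$1 = a \<and> B$2$2 = b \<and> det B = p"
  then obtain B :: "complex^2^2" where B: "onorm (\<lambda>x. B *v x) \<le> 1" "B$1$1 = a" "B$2$2 = b" "det B = p" by blast
  have "E2 a b p" unfolding E2_def using E8_imp_E2[OF B(1)] B by auto
  then show "Hc a b p" using E2_iff_E2b E2b_imp_E5 E5_imp_Hc by blast
next
  assume "Hc a b p"
  then have "E6 a b p" using Hc_E1 E1_imp_E6 Hc_sym Hc_def by metis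
  then show "\<exists>B :: complex^2^2. onorm (\<lambda>x. B *v x) \<le> 1 \<and> B$1$1 = a \<and> B$2$2 = b \<and> det B = p"
    using E6_imp_E9 by blast
qed

lemma Hc_E6: "Hc a b p \<Longrightarrow> E6 a b p"
proof -
  assume H: "Hc a b p"
  have e1: "a = cb a b p + cnj (cb b a p) * p \<and> cmod (cb a b p) + cmod (cb b a p) \<le> 1" using Hc_E1[OF H] .
  have e2: "b = cb b a p + cnj (cb a b p) * p" using Hc_E1[of b a p] H Hc_sym by blast
  show ?thesis using E1_imp_E6[of a "cb a b p" "cb b a p" p b] e1 e2 H unfolding Hc_def by blast
qed

lemma E9_iff_Hc:
  "(\<exists>B :: complex^2^2. onorm (\<lambda>x. B *v x) \<le> 1 \<and> transpose B = B \<and> B$1$1 = a \<and> B$2$2 = b \<and> det B = p) \<longleftrightarrow> Hc a b p"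
proof
  assume "\<exists>B :: complex^2^2. onorm (\<lambda>x. B *v x) \<le> 1 \<and> transpose B = B \<and> B$1$1 = a \<and> B$2$2 = b \<and> det B = p"
  then show "Hc a b p" using E8_iff_Hc by blast
next
  assume "Hc a b p"
  then show "\<exists>B :: complex^2^2. onorm (\<lambda>x. B *v x) \<le> 1 \<and> transpose B = B \<and> B$1$1 = a \<and> B$2$2 = b \<and> det B = p"
    using Hc_E6 E6_imp_E9 by blast
qed

lemma E6_iff_Hc: "E6 a b p \<longleftrightarrow> Hc a b p"
  using Hc_E6 E6_imp_E9 E9_iff_Hc by blast

lemma E2_iff_Hc: "E2 a b p \<longleftrightarrow> Hc a b p"
proof
  assume "E2 a b p" then show "Hc a b p" using E2_iff_E2b E2b_imp_E5 E5_imp_Hc by blast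
next
  assume "Hc a b p"
  then obtain B :: "complex^2^2" where B: "onorm (\<lambda>x. B *v x) \<le> 1" "B$1$1 = a" "B$2$2 = b" "det B = p"
    using E8_iff_Hc by blast
  show "E2 a b p" unfolding E2_def using E8_imp_E2[OF B(1)] B by auto
qed

lemma E2b_iff_Hc: "E2b a b p \<longleftrightarrow> Hc a b p"
  using E2_iff_E2b E2_iff_Hc by blast

lemma E5_iff_Hc: "E5 a b p \<longleftrightarrow> Hc a b p"
  using E5_imp_Hc E2b_iff_Hc E2b_imp_E5 by blast

lemma E4_iff_Hc: "E4 a b p \<longleftrightarrow> Hc a b p"
  using E4_iff_E6 E6_iff_Hc by blast


context
  fixes C :: real and u v a b q :: complex
  assumes C: "C > 0" and u: "u = of_real C * a" and v: "v = of_real C * b"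
begin

lemma sc_norm: "cmod u = C * cmod a" "cmod v = C * cmod b"
  using C unfolding u v by (simp_all add: norm_mult)

lemma sc_diff: "cmod (u - cnj v * q) = C * cmod (a - cnj b * q)" "cmod (v - cnj u * q) = C * cmod (b - cnj a * q)"
proof -
  have "u - cnj v * q = of_real C * (a - cnj b * q)" unfolding u v by (simp add: algebra_simps)
  then show "cmod (u - cnj v * q) = C * cmod (a - cnj b * q)" using C by (simp add: norm_mult)
  have "v - cnj u * q = of_real C * (b - cnj a * q)" unfolding u v by (simp add: algebra_simps)
  then show "cmod (v - cnj u * q) = C * cmod (b - cnj a * q)" using C by (simp add: norm_mult)
qed

lemma sc_prod: "cmod (u * v - of_real (C^2) * q) = C^2 * cmod (a * b - q)"
  "u * v = of_real (C^2) * q \<longleftrightarrow> a * b = q"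
proof -
  have e: "u * v - of_real (C^2) * q = of_real (C^2) * (a * b - q)" unfolding u v by (simp add: algebra_simps power2_eq_square)
  then show "cmod (u * v - of_real (C^2) * q) = C^2 * cmod (a * b - q)" unfolding e norm_mult norm_of_real by simp
  show "u * v = of_real (C^2) * q \<longleftrightarrow> a * b = q" using e C by (metis eq_iff_diff_eq_0 mult_eq_0_iff of_real_eq_0_iff zero_less_power less_irrefl)
qed

lemma sc_E2: "(\<forall>z\<in>ball 0 1. \<forall>w\<in>ball 0 1. of_real C - u * z - v * w + of_real C * q * z * w \<noteq> 0) \<longleftrightarrow> Hc a b q"
proof -
  have "of_real C - u * z - v * w + of_real C * q * z * w = of_real C * (1 - a*z - b*w + q*z*w)" for z w
    unfolding u v by (simp add: algebra_simps)
  then have "(\<forall>z\<in>ball 0 1. \<forall>w\<in>ball 0 1. of_real C - u * z - v * w + of_real C * q * z * w \<noteq> 0) \<longleftrightarrow> E2 a b q"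
    unfolding E2_def using C by simp
  then show ?thesis using E2_iff_Hc by simp
qed

lemma sc_E4: "(C * cmod (u - cnj v * q) + cmod (u * v - of_real (C^2) * q) \<le> C^2 - (cmod v)^2 \<and>
    (u * v = of_real (C^2) * q \<longrightarrow> cmod u \<le> C)) \<longleftrightarrow> Hc a b q"
proof -
  have C2: "C^2 > 0" using C by simp
  have "C * cmod (u - cnj v * q) + cmod (u * v - of_real (C^2) * q) = C^2 * (cmod (a - cnj b * q) + cmod (a * b - q))"
    unfolding sc_diff sc_prod by (simp add: power2_eq_square algebra_simps)
  moreover have "C^2 - (cmod v)^2 = C^2 * (1 - (cmod b)^2)" unfolding sc_norm by (simp add: power_mult_distrib algebra_simps)
  moreover have "cmod u \<le> C \<longleftrightarrow> cmod a \<le> 1" unfolding sc_norm using C by simp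
  ultimately have "(C * cmod (u - cnj v * q) + cmod (u * v - of_real (C^2) * q) \<le> C^2 - (cmod v)^2 \<and>
    (u * v = of_real (C^2) * q \<longrightarrow> cmod u \<le> C)) \<longleftrightarrow> E4 a b q"
    unfolding E4_def sc_prod using C2 by (simp add: mult_le_cancel_left_pos)
  then show ?thesis using E4_iff_Hc by simp
qed

lemma sc_E5: "((cmod u)^2 - (cmod v)^2 + C^2 * (cmod q)^2 + 2 * C * cmod (v - cnj u * q) \<le> C^2 \<and> cmod v \<le> C)
   \<longleftrightarrow> Hc a b q"
proof -
  have C2: "C^2 > 0" using C by simp
  have "(cmod u)^2 - (cmod v)^2 + C^2 * (cmod q)^2 + 2 * C * cmod (v - cnj u * q) =
     C^2 * ((cmod a)^2 - (cmod b)^2 + (cmod q)^2 + 2 * cmod (b - cnj a * q))"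
    unfolding sc_norm sc_diff by (simp add: power_mult_distrib power2_eq_square algebra_simps)
  moreover have "cmod v \<le> C \<longleftrightarrow> cmod b \<le> 1" unfolding sc_norm using C by simp
  ultimately have "((cmod u)^2 - (cmod v)^2 + C^2 * (cmod q)^2 + 2 * C * cmod (v - cnj u * q) \<le> C^2 \<and> cmod v \<le> C)
   \<longleftrightarrow> E5 a b q" unfolding E5_def using C2 mult_le_cancel_left_pos[OF C2, of _ 1] by simp
  then show ?thesis using E5_iff_Hc by simp
qed

lemma sc_E6: "(cmod q \<le> 1 \<and> (cmod u)^2 + (cmod v)^2 - C^2 * (cmod q)^2 + 2 * cmod (u * v - of_real (C^2) * q) \<le> C^2)
   \<longleftrightarrow> Hc a b q"
proof -
  have C2: "C^2 > 0" using C by simp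
  have "(cmod u)^2 + (cmod v)^2 - C^2 * (cmod q)^2 + 2 * cmod (u * v - of_real (C^2) * q) =
     C^2 * ((cmod a)^2 + (cmod b)^2 - (cmod q)^2 + 2 * cmod (a * b - q))"
    unfolding sc_norm sc_prod by (simp add: power_mult_distrib algebra_simps)
  then have "(cmod q \<le> 1 \<and> (cmod u)^2 + (cmod v)^2 - C^2 * (cmod q)^2 + 2 * cmod (u * v - of_real (C^2) * q) \<le> C^2)
   \<longleftrightarrow> E6 a b q" unfolding E6_def using C2 mult_le_cancel_left_pos[OF C2, of _ 1] by simp
  then show ?thesis using E6_iff_Hc by simp
qed

lemma sc_E7: "cmod (v - cnj u * q) + cmod (u - cnj v * q) \<le> C * (1 - (cmod q)^2) \<longleftrightarrow>
   cmod (a - cnj b * q) + cmod (b - cnj a * q) \<le> 1 - (cmod q)^2"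
  unfolding sc_diff using C
  by (metis (no_types, lifting) add.commute distrib_left mult_le_cancel_left_pos)

lemma sc_a: "cmod u \<le> C \<longleftrightarrow> cmod a \<le> 1" unfolding sc_norm using C by simp

end


lemma closed_Hc:
  fixes f g h :: "'a::topological_space \<Rightarrow> complex"
  assumes "continuous_on UNIV f" "continuous_on UNIV g" "continuous_on UNIV h"
  shows "closed {x. Hc (f x) (g x) (h x)}"
proof -
  have "{x. Hc (f x) (g x) (h x)} =
     {x. cmod (h x) \<le> 1} \<inter> {x. cmod (f x - cnj (g x) * h x) + cmod (g x - cnj (f x) * h x) \<le> 1 - (cmod (h x))^2}
     \<inter> {x. cmod (f x) \<le> 1} \<inter> {x. cmod (g x) \<le> 1}"
    unfolding Hc_def by auto
  moreover have "closed \<dots>"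
    by (intro closed_Int closed_Collect_le continuous_intros assms continuous_on_cnj)
  ultimately show ?thesis by simp
qed

definition Kset :: "nat \<Rightarrow> ((nat \<Rightarrow> complex) \<times> complex) set" where
  "Kset n = {(y, q). \<forall>j\<in>{1..n-1}. Hc (y j / of_nat (n choose j)) (y (n - j) / of_nat (n choose j)) q}"

lemma coord_cont: "continuous_on UNIV (\<lambda>x :: (nat \<Rightarrow> complex) \<times> complex. fst x j)"
  by (rule continuous_on_product_then_coordinatewise) (intro continuous_intros)

lemma closed_Kset: "closed (Kset n)"
proof -
  have "Kset n = (\<Inter>j\<in>{1..n-1}. {x. Hc (fst x j / of_nat (n choose j)) (fst x (n - j) / of_nat (n choose j)) (snd x)})"
    unfolding Kset_def by auto
  moreover have "closed \<dots>"
    by (intro closed_INT ballI closed_Hc continuous_intros coord_cont) auto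
  ultimately show ?thesis by simp
qed

lemma choose_pos: "j \<in> {1..n-1} \<Longrightarrow> (n choose j) > 0"
  by (simp; arith)

lemma Gtilde_sub: "Gtilde n \<subseteq> Kset n"
proof
  fix x assume "x \<in> Gtilde n"
  then obtain y q \<beta> where x: "x = (y, q)" and q: "cmod q < 1"
    and b: "\<forall>j\<in>{1..n-1}. y j = \<beta> j + cnj (\<beta> (n - j)) * q \<and> cmod (\<beta> j) + cmod (\<beta> (n - j)) < real (n choose j)"
    unfolding Gtilde_def by auto
  have "Hc (y j / of_nat (n choose j)) (y (n - j) / of_nat (n choose j)) q" if j: "j \<in> {1..n-1}" for j
  proof -
    define C where "C = real (n choose j)"
    have C: "C > 0" unfolding C_def using j by (simp; arith)
    have nj: "n - j \<in> {1..n-1}" "n - (n - j) = j" "n choose (n - j) = n choose j" using j by (auto simp: binomial_symmetric[symmetric])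
    have e1: "y j = \<beta> j + cnj (\<beta> (n - j)) * q" and l: "cmod (\<beta> j) + cmod (\<beta> (n - j)) < C"
      using b j unfolding C_def by auto
    have e2: "y (n - j) = \<beta> (n - j) + cnj (\<beta> j) * q" using b nj by force
    have cC: "(of_nat (n choose j) :: complex) = of_real C" unfolding C_def by simp
    show ?thesis unfolding cC
    proof (rule E1_imp_Hc[of _ "\<beta> j / of_real C" "\<beta> (n - j) / of_real C"])
      show "y j / of_real C = \<beta> j / of_real C + cnj (\<beta> (n - j) / of_real C) * q" using e1 C by (simp add: add_divide_distrib)
      show "y (n - j) / of_real C = \<beta> (n - j) / of_real C + cnj (\<beta> j / of_real C) * q" using e2 C by (simp add: add_divide_distrib)
      show "cmod (\<beta> j / of_real C) + cmod (\<beta> (n - j) / of_real C) \<le> 1" using l C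
        by (simp add: norm_divide add_divide_distrib[symmetric])
      show "cmod q \<le> 1" using q by simp
    qed
  qed
  then show "x \<in> Kset n" unfolding Kset_def x by auto
qed

lemma Kset_sub: assumes n2: "n \<ge> 2" shows "Kset n \<subseteq> closure (Gtilde n)"
proof
  fix x assume "x \<in> Kset n"
  then obtain y q where x: "x = (y, q)" and K: "\<forall>j\<in>{1..n-1}. Hc (y j / of_nat (n choose j)) (y (n - j) / of_nat (n choose j)) q"
    unfolding Kset_def by auto
  define \<beta> where "\<beta> i = of_nat (n choose i) * cb (y i / of_nat (n choose i)) (y (n - i) / of_nat (n choose i)) q" for i
  have bj: "y j = \<beta> j + cnj (\<beta> (n - j)) * q \<and> cmod (\<beta> j) + cmod (\<beta> (n - j)) \<le> real (n choose j)"
    if j: "j \<in> {1..n-1}" for j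
  proof -
    define C where "C = real (n choose j)"
    have C: "C > 0" unfolding C_def using j by (simp; arith)
    have nj: "n - (n - j) = j" "n choose (n - j) = n choose j" using j by (auto simp: binomial_symmetric[symmetric])
    have cC: "(of_nat (n choose j) :: complex) = of_real C" unfolding C_def by simp
    define a where "a = y j / of_real C"
    define b where "b = y (n - j) / of_real C"
    have "Hc (y j / of_nat (n choose j)) (y (n-j) / of_nat (n choose j)) q" using K j by blast
    then have H: "Hc a b q" unfolding a_def b_def cC .
    have b1: "\<beta> j = of_real C * cb a b q" unfolding \<beta>_def a_def b_def cC ..
    have b2: "\<beta> (n - j) = of_real C * cb b a q" unfolding \<beta>_def a_def b_def nj cC ..
    have E: "a = cb a b q + cnj (cb b a q) * q \<and> cmod (cb a b q) + cmod (cb b a q) \<le> 1" using Hc_E1[OF H] .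
    have "y j = of_real C * a" unfolding a_def using C by simp
    also have "\<dots> = of_real C * (cb a b q + cnj (cb b a q) * q)" using E by simp
    also have "\<dots> = \<beta> j + cnj (\<beta> (n - j)) * q" unfolding b1 b2 by (simp add: algebra_simps)
    finally have "y j = \<beta> j + cnj (\<beta> (n - j)) * q" .
    moreover have "cmod (\<beta> j) + cmod (\<beta> (n - j)) = C * (cmod (cb a b q) + cmod (cb b a q))"
      unfolding b1 b2 using C by (simp add: norm_mult algebra_simps)
    moreover have "C * (cmod (cb a b q) + cmod (cb b a q)) \<le> C * 1" using E C by (intro mult_left_mono) auto
    ultimately show ?thesis unfolding C_def by simp
  qed
  have q1: "cmod q \<le> 1"
  proof -
    have "1 \<in> {1..n-1}" using n2 by simp
    then show ?thesis using K unfolding Hc_def by blast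
  qed
  define g where "g r = ((\<lambda>i. if i \<in> {1..n-1} then of_real r * \<beta> i + cnj (of_real r * \<beta> (n - i)) * (of_real r * q) else y i),
     of_real r * q)" for r :: real
  have ci: "continuous_on UNIV (\<lambda>r::real. if i \<in> {1..n-1} then of_real r * \<beta> i + cnj (of_real r * \<beta> (n - i)) * (of_real r * q) else y i)" for i
  proof (cases "i \<in> {1..n-1}")
    case True then show ?thesis by (simp only: True if_True) (intro continuous_intros)
  next
    case False then show ?thesis by (simp only: False if_False) (rule continuous_on_const)
  qed
  have cont: "continuous_on UNIV g"
    unfolding g_def
    by (intro continuous_intros continuous_on_coordinatewise_then_product ci)
  have g1: "g 1 = (y, q)" unfolding g_def using bj by (auto simp: fun_eq_iff)
  have gG: "g ` {0..<1} \<subseteq> Gtilde n"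
  proof
    fix z assume "z \<in> g ` {0..<1}"
    then obtain r where r: "0 \<le> r" "r < 1" and z: "z = g r" by auto
    have "of_real r * q \<in> ball 0 1" using r q1
      by (simp add: norm_mult) (metis abs_of_nonneg mult_le_cancel_left1 le_less_trans not_less mult.commute mult_right_le_one_le norm_ge_zero)
    moreover have "\<forall>j\<in>{1..n-1}. fst (g r) j = of_real r * \<beta> j + cnj (of_real r * \<beta> (n - j)) * (of_real r * q) \<and>
        cmod (of_real r * \<beta> j) + cmod (of_real r * \<beta> (n - j)) < real (n choose j)"
    proof
      fix j assume j: "j \<in> {1..n-1}"
      have "cmod (of_real r * \<beta> j) + cmod (of_real r * \<beta> (n - j)) = r * (cmod (\<beta> j) + cmod (\<beta> (n - j)))"
        using r by (simp add: norm_mult algebra_simps)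
      also have "\<dots> \<le> r * real (n choose j)" using bj[OF j] r by (intro mult_left_mono) auto
      also have "\<dots> < real (n choose j)" using r choose_pos[OF j] by simp
      finally show "fst (g r) j = of_real r * \<beta> j + cnj (of_real r * \<beta> (n - j)) * (of_real r * q) \<and>
        cmod (of_real r * \<beta> j) + cmod (of_real r * \<beta> (n - j)) < real (n choose j)"
        using j unfolding g_def by simp
    qed
    ultimately show "z \<in> Gtilde n" unfolding z Gtilde_def
      by (cases "g r") (auto intro!: exI[of _ "\<lambda>i. of_real r * \<beta> i"] simp: g_def)
  qed
  have "g ` closure {0..<1} \<subseteq> closure (Gtilde n)"
  proof (rule image_closure_subset)
    show "continuous_on (closure {0..<1}) g" using cont by (rule continuous_on_subset) simp
    show "closed (closure (Gtilde n))" by simp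
    show "g ` {0..<1} \<subseteq> closure (Gtilde n)" using gG closure_subset by blast
  qed
  moreover have "(1::real) \<in> closure {0..<1}" by (simp add: closure_atLeastLessThan)
  then have "g 1 \<in> g ` closure {0..<1}" by (rule imageI)
  ultimately have "g 1 \<in> closure (Gtilde n)" by (rule subsetD)
  then show "x \<in> closure (Gtilde n)" unfolding g1 x .
qed


theorem mainTheorem3:
  fixes n :: nat and y :: "nat \<Rightarrow> complex" and q :: complex
  assumes "n \<ge> 2"
  defines "J \<equiv> {1..n div 2}"
  shows
   "let c = (\<lambda>j. real (n choose j));
        P1 = ((y, q) \<in> Gammatilde n);
        P2 = (\<forall>z\<in>ball 0 1. \<forall>w\<in>ball 0 1. \<forall>j\<in>J.
                 of_real (c j) - y j * z - y (n - j) * w + of_real (c j) * q * z * w \<noteq> 0);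
        P3 = (\<forall>j\<in>J. Phi_Hinf n j y q \<le> 1 \<and>
                 (y j * y (n - j) = of_real (c j ^ 2) * q \<longrightarrow> cmod (y (n - j)) \<le> c j));
        P3' = (\<forall>j\<in>J. Phi_Hinf n (n - j) y q \<le> 1 \<and>
                 (y j * y (n - j) = of_real (c j ^ 2) * q \<longrightarrow> cmod (y j) \<le> c j));
        P4 = (\<forall>j\<in>J. c j * cmod (y j - cnj (y (n - j)) * q)
                   + cmod (y j * y (n - j) - of_real (c j ^ 2) * q) \<le> c j ^ 2 - cmod (y (n - j)) ^ 2 \<and>
                 (y j * y (n - j) = of_real (c j ^ 2) * q \<longrightarrow> cmod (y j) \<le> c j));
        P4' = (\<forall>j\<in>J. c j * cmod (y (n - j) - cnj (y j) * q)
                   + cmod (y j * y (n - j) - of_real (c j ^ 2) * q) \<le> c j ^ 2 - cmod (y j) ^ 2 \<and>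
                 (y j * y (n - j) = of_real (c j ^ 2) * q \<longrightarrow> cmod (y (n - j)) \<le> c j));
        P5 = (\<forall>j\<in>J. cmod (y j) ^ 2 - cmod (y (n - j)) ^ 2 + c j ^ 2 * cmod q ^ 2
                   + 2 * c j * cmod (y (n - j) - cnj (y j) * q) \<le> c j ^ 2 \<and>
                 cmod (y (n - j)) \<le> c j);
        P5' = (\<forall>j\<in>J. cmod (y (n - j)) ^ 2 - cmod (y j) ^ 2 + c j ^ 2 * cmod q ^ 2
                   + 2 * c j * cmod (y j - cnj (y (n - j)) * q) \<le> c j ^ 2 \<and>
                 cmod (y j) \<le> c j);
        P6 = (cmod q \<le> 1 \<and> (\<forall>j\<in>J. cmod (y j) ^ 2 + cmod (y (n - j)) ^ 2 - c j ^ 2 * cmod q ^ 2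
                   + 2 * cmod (y j * y (n - j) - of_real (c j ^ 2) * q) \<le> c j ^ 2));
        P7 = ((\<forall>j\<in>J. cmod (y (n - j) - cnj (y j) * q) + cmod (y j - cnj (y (n - j)) * q)
                   \<le> c j * (1 - cmod q ^ 2)) \<and>
              (cmod q = 1 \<longrightarrow> (\<forall>j\<in>J. cmod (y j) \<le> c j)));
        P8 = (\<exists>B :: nat \<Rightarrow> complex^2^2. \<forall>j\<in>J. onorm (\<lambda>x. B j *v x) \<le> 1 \<and>
                 y j = of_real (c j) * B j $ 1 $ 1 \<and> y (n - j) = of_real (c j) * B j $ 2 $ 2 \<and>
                 det (B j) = q);
        P9 = (\<exists>B :: nat \<Rightarrow> complex^2^2. \<forall>j\<in>J. onorm (\<lambda>x. B j *v x) \<le> 1 \<and>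
                 transpose (B j) = B j \<and>
                 y j = of_real (c j) * B j $ 1 $ 1 \<and> y (n - j) = of_real (c j) * B j $ 2 $ 2 \<and>
                 det (B j) = q);
        P10 = (cmod q \<le> 1 \<and> (\<exists>\<beta> :: nat \<Rightarrow> complex. \<forall>j\<in>J.
                 y j = \<beta> j + cnj (\<beta> (n - j)) * q \<and> y (n - j) = \<beta> (n - j) + cnj (\<beta> j) * q \<and>
                 cmod (\<beta> j) + cmod (\<beta> (n - j)) \<le> c j))
    in (P1 \<longleftrightarrow> P2) \<and> (P1 \<longleftrightarrow> P3) \<and> (P1 \<longleftrightarrow> P3') \<and> (P1 \<longleftrightarrow> P4) \<and> (P1 \<longleftrightarrow> P4')
       \<and> (P1 \<longleftrightarrow> P5) \<and> (P1 \<longleftrightarrow> P5') \<and> (P1 \<longleftrightarrow> P6) \<and> (P1 \<longleftrightarrow> P7) \<and> (P1 \<longleftrightarrow> P8)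
       \<and> (P1 \<longleftrightarrow> P9) \<and> (P1 \<longleftrightarrow> P10)"
proof -
  define c where "c = (\<lambda>j. real (n choose j))"
  define T where "T j \<longleftrightarrow> Hc (y j / of_real (c j)) (y (n - j) / of_real (c j)) q" for j
  have Jp: "1 \<le> j \<and> j < n \<and> j \<in> {1..n-1} \<and> n - j \<in> {1..n-1} \<and> n - (n - j) = j \<and> c (n - j) = c j \<and> c j > 0"
    if "j \<in> J" for j
  proof -
    have j: "1 \<le> j" "j \<le> n div 2" using that unfolding J_def by auto
    then have "j < n" using assms(1) by linarith
    then show ?thesis using j unfolding c_def by (auto simp: binomial_symmetric[symmetric])
  qed
  have J1: "1 \<in> J" using assms(1) unfolding J_def by auto
  have uv: "y j = of_real (c j) * (y j / of_real (c j)) \<and> y (n - j) = of_real (c j) * (y (n - j) / of_real (c j))"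
    if "j \<in> J" for j using Jp[OF that] by simp
  have Tsym: "T (n - j) \<longleftrightarrow> T j" if "j \<in> J" for j
    using Jp[OF that] Hc_sym unfolding T_def by metis
  have K: "(y, q) \<in> Gammatilde n \<longleftrightarrow> (y, q) \<in> Kset n"
  proof -
    have "closure (Gtilde n) = Kset n"
      using Kset_sub[OF assms(1)] closure_minimal[OF Gtilde_sub closed_Kset] by blast
    then show ?thesis unfolding Gammatilde_def by simp
  qed
  have P1: "(y, q) \<in> Gammatilde n \<longleftrightarrow> (\<forall>j\<in>J. T j)"
  proof -
    have KT: "(y, q) \<in> Kset n \<longleftrightarrow> (\<forall>j\<in>{1..n-1}. T j)"
      unfolding Kset_def T_def c_def by simp
    have "(\<forall>j\<in>{1..n-1}. T j) \<longleftrightarrow> (\<forall>j\<in>J. T j)"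
    proof
      assume "\<forall>j\<in>{1..n-1}. T j" then show "\<forall>j\<in>J. T j" using Jp by blast
    next
      assume A: "\<forall>j\<in>J. T j"
      show "\<forall>j\<in>{1..n-1}. T j"
      proof
        fix j assume j: "j \<in> {1..n-1}"
        show "T j"
        proof (cases "j \<le> n div 2")
          case True then have "j \<in> J" using j unfolding J_def by auto
          then show ?thesis using A by blast
        next
          case False
          then have nj: "n - j \<in> J" using j unfolding J_def by auto
          then have "T (n - (n - j))" using A Tsym by blast
          moreover have "n - (n - j) = j" using j by auto
          ultimately show ?thesis by simp
        qed
      qed
    qed
    then show ?thesis using K KT by simp
  qed
  have P2: "(\<forall>z\<in>ball 0 1. \<forall>w\<in>ball 0 1. \<forall>j\<in>J.
                 of_real (c j) - y j * z - y (n - j) * w + of_real (c j) * q * z * w \<noteq> 0) \<longleftrightarrow> (\<forall>j\<in>J. T j)"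
  proof -
    have "(\<forall>z\<in>ball 0 1. \<forall>w\<in>ball 0 1. of_real (c j) - y j * z - y (n - j) * w + of_real (c j) * q * z * w \<noteq> 0) \<longleftrightarrow> T j"
      if "j \<in> J" for j
      unfolding T_def using sc_E2[of "c j" "y j" "y j / of_real (c j)" "y (n - j)" "y (n - j) / of_real (c j)" q] Jp[OF that] uv[OF that]
      by blast
    then show ?thesis by blast
  qed
  have P3: "(\<forall>j\<in>J. Phi_Hinf n j y q \<le> 1 \<and>
                 (y j * y (n - j) = of_real (c j ^ 2) * q \<longrightarrow> cmod (y (n - j)) \<le> c j)) \<longleftrightarrow> (\<forall>j\<in>J. T j)"
  proof -
    have "(Phi_Hinf n j y q \<le> 1 \<and> (y j * y (n - j) = of_real (c j ^ 2) * q \<longrightarrow> cmod (y (n - j)) \<le> c j)) \<longleftrightarrow> T j"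
      if "j \<in> J" for j
    proof -
      have "(Phi_Hinf n j y q \<le> 1 \<and> (y j * y (n - j) = of_real (c j ^ 2) * q \<longrightarrow> cmod (y (n - j)) \<le> c j))
          \<longleftrightarrow> E2b (y j / of_real (c j)) (y (n - j) / of_real (c j)) q"
        by (rule Phi_lemma) (use Jp[OF that] uv[OF that] c_def in auto)
      then show ?thesis unfolding T_def E2b_iff_Hc .
    qed
    then show ?thesis by blast
  qed
  have P3': "(\<forall>j\<in>J. Phi_Hinf n (n - j) y q \<le> 1 \<and>
                 (y j * y (n - j) = of_real (c j ^ 2) * q \<longrightarrow> cmod (y j) \<le> c j)) \<longleftrightarrow> (\<forall>j\<in>J. T j)"
  proof -
    have "(Phi_Hinf n (n - j) y q \<le> 1 \<and> (y j * y (n - j) = of_real (c j ^ 2) * q \<longrightarrow> cmod (y j) \<le> c j)) \<longleftrightarrow> T j"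
      if "j \<in> J" for j
    proof -
      have jj: "n - (n - j) = j" "c (n - j) = c j" "c j > 0" using Jp[OF that] by auto
      have "(Phi_Hinf n (n - j) y q \<le> 1 \<and> (y (n - j) * y (n - (n - j)) = of_real (c j ^ 2) * q \<longrightarrow> cmod (y (n - (n - j))) \<le> c j))
          \<longleftrightarrow> E2b (y (n - j) / of_real (c j)) (y j / of_real (c j)) q"
        by (rule Phi_lemma) (use jj uv[OF that] c_def in auto)
      then have "(Phi_Hinf n (n - j) y q \<le> 1 \<and> (y j * y (n - j) = of_real (c j ^ 2) * q \<longrightarrow> cmod (y j) \<le> c j))
          \<longleftrightarrow> Hc (y (n - j) / of_real (c j)) (y j / of_real (c j)) q"
        unfolding jj E2b_iff_Hc by (simp add: mult.commute)
      then show ?thesis unfolding T_def using Hc_sym by blast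
    qed
    then show ?thesis by blast
  qed
  have P4: "(\<forall>j\<in>J. c j * cmod (y j - cnj (y (n - j)) * q)
                   + cmod (y j * y (n - j) - of_real (c j ^ 2) * q) \<le> c j ^ 2 - cmod (y (n - j)) ^ 2 \<and>
                 (y j * y (n - j) = of_real (c j ^ 2) * q \<longrightarrow> cmod (y j) \<le> c j)) \<longleftrightarrow> (\<forall>j\<in>J. T j)"
  proof -
    have "(c j * cmod (y j - cnj (y (n - j)) * q)
                   + cmod (y j * y (n - j) - of_real (c j ^ 2) * q) \<le> c j ^ 2 - cmod (y (n - j)) ^ 2 \<and>
                 (y j * y (n - j) = of_real (c j ^ 2) * q \<longrightarrow> cmod (y j) \<le> c j)) \<longleftrightarrow> T j" if "j \<in> J" for j
      unfolding T_def using sc_E4[of "c j" "y j" "y j / of_real (c j)" "y (n - j)" "y (n - j) / of_real (c j)" q] Jp[OF that] uv[OF that]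
      by blast
    then show ?thesis by blast
  qed
  have P4': "(\<forall>j\<in>J. c j * cmod (y (n - j) - cnj (y j) * q)
                   + cmod (y j * y (n - j) - of_real (c j ^ 2) * q) \<le> c j ^ 2 - cmod (y j) ^ 2 \<and>
                 (y j * y (n - j) = of_real (c j ^ 2) * q \<longrightarrow> cmod (y (n - j)) \<le> c j)) \<longleftrightarrow> (\<forall>j\<in>J. T j)"
  proof -
    have "(c j * cmod (y (n - j) - cnj (y j) * q)
                   + cmod (y j * y (n - j) - of_real (c j ^ 2) * q) \<le> c j ^ 2 - cmod (y j) ^ 2 \<and>
                 (y j * y (n - j) = of_real (c j ^ 2) * q \<longrightarrow> cmod (y (n - j)) \<le> c j)) \<longleftrightarrow> T j" if "j \<in> J" for j
    proof -
      have "(c j * cmod (y (n - j) - cnj (y j) * q)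
                   + cmod (y (n - j) * y j - of_real (c j ^ 2) * q) \<le> c j ^ 2 - cmod (y j) ^ 2 \<and>
                 (y (n - j) * y j = of_real (c j ^ 2) * q \<longrightarrow> cmod (y (n - j)) \<le> c j)) \<longleftrightarrow>
            Hc (y (n - j) / of_real (c j)) (y j / of_real (c j)) q"
        using sc_E4[of "c j" "y (n - j)" "y (n - j) / of_real (c j)" "y j" "y j / of_real (c j)" q] Jp[OF that] uv[OF that]
        by blast
      then show ?thesis unfolding T_def using Hc_sym by (simp add: mult.commute)
    qed
    then show ?thesis by blast
  qed
  have P5: "(\<forall>j\<in>J. cmod (y j) ^ 2 - cmod (y (n - j)) ^ 2 + c j ^ 2 * cmod q ^ 2
                   + 2 * c j * cmod (y (n - j) - cnj (y j) * q) \<le> c j ^ 2 \<and>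
                 cmod (y (n - j)) \<le> c j) \<longleftrightarrow> (\<forall>j\<in>J. T j)"
  proof -
    have "(cmod (y j) ^ 2 - cmod (y (n - j)) ^ 2 + c j ^ 2 * cmod q ^ 2
                   + 2 * c j * cmod (y (n - j) - cnj (y j) * q) \<le> c j ^ 2 \<and>
                 cmod (y (n - j)) \<le> c j) \<longleftrightarrow> T j" if "j \<in> J" for j
      unfolding T_def using sc_E5[of "c j" "y j" "y j / of_real (c j)" "y (n - j)" "y (n - j) / of_real (c j)" q] Jp[OF that] uv[OF that]
      by blast
    then show ?thesis by blast
  qed
  have P5': "(\<forall>j\<in>J. cmod (y (n - j)) ^ 2 - cmod (y j) ^ 2 + c j ^ 2 * cmod q ^ 2
                   + 2 * c j * cmod (y j - cnj (y (n - j)) * q) \<le> c j ^ 2 \<and>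
                 cmod (y j) \<le> c j) \<longleftrightarrow> (\<forall>j\<in>J. T j)"
  proof -
    have "(cmod (y (n - j)) ^ 2 - cmod (y j) ^ 2 + c j ^ 2 * cmod q ^ 2
                   + 2 * c j * cmod (y j - cnj (y (n - j)) * q) \<le> c j ^ 2 \<and>
                 cmod (y j) \<le> c j) \<longleftrightarrow> T j" if "j \<in> J" for j
      unfolding T_def using sc_E5[of "c j" "y (n - j)" "y (n - j) / of_real (c j)" "y j" "y j / of_real (c j)" q] Jp[OF that] uv[OF that] Hc_sym
      by blast
    then show ?thesis by blast
  qed
  have P6: "(cmod q \<le> 1 \<and> (\<forall>j\<in>J. cmod (y j) ^ 2 + cmod (y (n - j)) ^ 2 - c j ^ 2 * cmod q ^ 2
                   + 2 * cmod (y j * y (n - j) - of_real (c j ^ 2) * q) \<le> c j ^ 2)) \<longleftrightarrow> (\<forall>j\<in>J. T j)"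
  proof -
    have e: "(cmod q \<le> 1 \<and> cmod (y j) ^ 2 + cmod (y (n - j)) ^ 2 - c j ^ 2 * cmod q ^ 2
                   + 2 * cmod (y j * y (n - j) - of_real (c j ^ 2) * q) \<le> c j ^ 2) \<longleftrightarrow> T j" if "j \<in> J" for j
      unfolding T_def using sc_E6[of "c j" "y j" "y j / of_real (c j)" "y (n - j)" "y (n - j) / of_real (c j)" q] Jp[OF that] uv[OF that]
      by blast
    have "T j \<Longrightarrow> cmod q \<le> 1" for j unfolding T_def Hc_def by blast
    then show ?thesis using e J1 by blast
  qed
  have P7: "((\<forall>j\<in>J. cmod (y (n - j) - cnj (y j) * q) + cmod (y j - cnj (y (n - j)) * q)
                   \<le> c j * (1 - cmod q ^ 2)) \<and>
              (cmod q = 1 \<longrightarrow> (\<forall>j\<in>J. cmod (y j) \<le> c j))) \<longleftrightarrow> (\<forall>j\<in>J. T j)"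
  proof -
    have e: "((cmod (y (n - j) - cnj (y j) * q) + cmod (y j - cnj (y (n - j)) * q) \<le> c j * (1 - cmod q ^ 2)) \<and>
              (cmod q = 1 \<longrightarrow> cmod (y j) \<le> c j)) \<longleftrightarrow> T j" if "j \<in> J" for j
    proof -
      have C: "c j > 0" using Jp[OF that] by simp
      note s7 = sc_E7[OF C, of "y j" "y j / of_real (c j)" "y (n - j)" "y (n - j) / of_real (c j)" q]
      note sa = sc_a[OF C, of "y j" "y j / of_real (c j)" "y (n - j)" "y (n - j) / of_real (c j)"]
      show ?thesis unfolding T_def E7_iff_Hc[symmetric] using s7 sa uv[OF that] by simp
    qed
    show ?thesis using e J1 by blast
  qed
  have P8: "(\<exists>B :: nat \<Rightarrow> complex^2^2. \<forall>j\<in>J. onorm (\<lambda>x. B j *v x) \<le> 1 \<and>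
                 y j = of_real (c j) * B j $ 1 $ 1 \<and> y (n - j) = of_real (c j) * B j $ 2 $ 2 \<and>
                 det (B j) = q) \<longleftrightarrow> (\<forall>j\<in>J. T j)"
  proof -
    have e: "(onorm (\<lambda>x. M *v x) \<le> 1 \<and> y j = of_real (c j) * M $ 1 $ 1 \<and> y (n - j) = of_real (c j) * M $ 2 $ 2 \<and> det M = q)
      \<longleftrightarrow> (onorm (\<lambda>x. M *v x) \<le> 1 \<and> M $ 1 $ 1 = y j / of_real (c j) \<and> M $ 2 $ 2 = y (n - j) / of_real (c j) \<and> det M = q)"
      if "j \<in> J" for j and M :: "complex^2^2"
      using Jp[OF that] by (auto simp: field_simps)
    have "(\<exists>M :: complex^2^2. onorm (\<lambda>x. M *v x) \<le> 1 \<and> y j = of_real (c j) * M $ 1 $ 1 \<and> y (n - j) = of_real (c j) * M $ 2 $ 2 \<and> det M = q)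
      \<longleftrightarrow> T j" if "j \<in> J" for j
      unfolding e[OF that] T_def E8_iff_Hc ..
    then show ?thesis by (metis (no_types, lifting) bchoice)
  qed
  have P9: "(\<exists>B :: nat \<Rightarrow> complex^2^2. \<forall>j\<in>J. onorm (\<lambda>x. B j *v x) \<le> 1 \<and>
                 transpose (B j) = B j \<and>
                 y j = of_real (c j) * B j $ 1 $ 1 \<and> y (n - j) = of_real (c j) * B j $ 2 $ 2 \<and>
                 det (B j) = q) \<longleftrightarrow> (\<forall>j\<in>J. T j)"
  proof -
    have e: "(onorm (\<lambda>x. M *v x) \<le> 1 \<and> transpose M = M \<and> y j = of_real (c j) * M $ 1 $ 1 \<and> y (n - j) = of_real (c j) * M $ 2 $ 2 \<and> det M = q)
      \<longleftrightarrow> (onorm (\<lambda>x. M *v x) \<le> 1 \<and> transpose M = M \<and> M $ 1 $ 1 = y j / of_real (c j) \<and> M $ 2 $ 2 = y (n - j) / of_real (c j) \<and> det M = q)"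
      if "j \<in> J" for j and M :: "complex^2^2"
      using Jp[OF that] by (auto simp: field_simps)
    have "(\<exists>M :: complex^2^2. onorm (\<lambda>x. M *v x) \<le> 1 \<and> transpose M = M \<and> y j = of_real (c j) * M $ 1 $ 1 \<and> y (n - j) = of_real (c j) * M $ 2 $ 2 \<and> det M = q)
      \<longleftrightarrow> T j" if "j \<in> J" for j
      unfolding e[OF that] T_def E9_iff_Hc ..
    then show ?thesis by (metis (no_types, lifting) bchoice)
  qed
  have P10: "(cmod q \<le> 1 \<and> (\<exists>\<beta> :: nat \<Rightarrow> complex. \<forall>j\<in>J.
                 y j = \<beta> j + cnj (\<beta> (n - j)) * q \<and> y (n - j) = \<beta> (n - j) + cnj (\<beta> j) * q \<and>
                 cmod (\<beta> j) + cmod (\<beta> (n - j)) \<le> c j)) \<longleftrightarrow> (\<forall>j\<in>J. T j)"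
  proof
    assume "cmod q \<le> 1 \<and> (\<exists>\<beta> :: nat \<Rightarrow> complex. \<forall>j\<in>J.
                 y j = \<beta> j + cnj (\<beta> (n - j)) * q \<and> y (n - j) = \<beta> (n - j) + cnj (\<beta> j) * q \<and>
                 cmod (\<beta> j) + cmod (\<beta> (n - j)) \<le> c j)"
    then obtain \<beta> where q1: "cmod q \<le> 1" and B: "\<forall>j\<in>J.
                 y j = \<beta> j + cnj (\<beta> (n - j)) * q \<and> y (n - j) = \<beta> (n - j) + cnj (\<beta> j) * q \<and>
                 cmod (\<beta> j) + cmod (\<beta> (n - j)) \<le> c j" by blast
    show "\<forall>j\<in>J. T j"
    proof
      fix j assume j: "j \<in> J"
      define C where "C = c j"
      have C: "C > 0" using Jp[OF j] C_def by simp
      have b: "y j = \<beta> j + cnj (\<beta> (n - j)) * q" "y (n - j) = \<beta> (n - j) + cnj (\<beta> j) * q"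
         "cmod (\<beta> j) + cmod (\<beta> (n - j)) \<le> C" using B j C_def by auto
      show "T j" unfolding T_def C_def[symmetric]
      proof (rule E1_imp_Hc[of _ "\<beta> j / of_real C" "\<beta> (n - j) / of_real C"])
        show "y j / of_real C = \<beta> j / of_real C + cnj (\<beta> (n - j) / of_real C) * q" using b C by (simp add: add_divide_distrib)
        show "y (n - j) / of_real C = \<beta> (n - j) / of_real C + cnj (\<beta> j / of_real C) * q" using b C by (simp add: add_divide_distrib)
        show "cmod (\<beta> j / of_real C) + cmod (\<beta> (n - j) / of_real C) \<le> 1" using b C
          by (simp add: norm_divide add_divide_distrib[symmetric])
        show "cmod q \<le> 1" using q1 .
      qed
    qed
  next
    assume A: "\<forall>j\<in>J. T j"
    have q1: "cmod q \<le> 1" using A J1 unfolding T_def Hc_def by blast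
    define \<beta> where "\<beta> i = of_real (c i) * cb (y i / of_real (c i)) (y (n - i) / of_real (c i)) q" for i
    have "y j = \<beta> j + cnj (\<beta> (n - j)) * q \<and> y (n - j) = \<beta> (n - j) + cnj (\<beta> j) * q \<and>
                 cmod (\<beta> j) + cmod (\<beta> (n - j)) \<le> c j" if j: "j \<in> J" for j
    proof -
      define C where "C = c j"
      have C: "C > 0" and jj: "n - (n - j) = j" "c (n - j) = c j" using Jp[OF j] C_def by auto
      define a where "a = y j / of_real C"
      define b where "b = y (n - j) / of_real C"
      have H: "Hc a b q" using A j unfolding T_def a_def b_def C_def by blast
      have b1: "\<beta> j = of_real C * cb a b q" unfolding \<beta>_def a_def b_def C_def ..
      have b2: "\<beta> (n - j) = of_real C * cb b a q" unfolding \<beta>_def a_def b_def jj C_def ..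
      have E: "a = cb a b q + cnj (cb b a q) * q \<and> cmod (cb a b q) + cmod (cb b a q) \<le> 1" using Hc_E1[OF H] .
      have E': "b = cb b a q + cnj (cb a b q) * q" using Hc_E1[of b a q] H Hc_sym by blast
      have "y j = of_real C * a" unfolding a_def using C by simp
      also have "\<dots> = of_real C * (cb a b q + cnj (cb b a q) * q)" using E by simp
      also have "\<dots> = \<beta> j + cnj (\<beta> (n - j)) * q" unfolding b1 b2 by (simp add: algebra_simps)
      finally have e1: "y j = \<beta> j + cnj (\<beta> (n - j)) * q" .
      have "y (n - j) = of_real C * b" unfolding b_def using C by simp
      also have "\<dots> = of_real C * (cb b a q + cnj (cb a b q) * q)" using E' by simp
      also have "\<dots> = \<beta> (n - j) + cnj (\<beta> j) * q" unfolding b1 b2 by (simp add: algebra_simps)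
      finally have e2: "y (n - j) = \<beta> (n - j) + cnj (\<beta> j) * q" .
      have "cmod (\<beta> j) + cmod (\<beta> (n - j)) = C * (cmod (cb a b q) + cmod (cb b a q))"
        unfolding b1 b2 using C by (simp add: norm_mult algebra_simps)
      also have "\<dots> \<le> C * 1" using E C by (intro mult_left_mono) auto
      finally show ?thesis using e1 e2 C_def by simp
    qed
    then show "cmod q \<le> 1 \<and> (\<exists>\<beta> :: nat \<Rightarrow> complex. \<forall>j\<in>J.
                 y j = \<beta> j + cnj (\<beta> (n - j)) * q \<and> y (n - j) = \<beta> (n - j) + cnj (\<beta> j) * q \<and>
                 cmod (\<beta> j) + cmod (\<beta> (n - j)) \<le> c j)" using q1 by blast
  qed
  show ?thesis
    unfolding Let_def c_def[symmetric]
    using P1 P2 P3 P3' P4 P4' P5 P5' P6 P7 P8 P9 P10 by simp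
qed


end
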